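(* For all $1\le r\le n$ and $1\le k\le r$ one has $\partial_r\big(M_r^{(k)}\big)\subseteq M_{r-1}^{(k-1)}$, where $M_{r-1}^{(0)}:=0$. Moreover $M_r=\bigoplus_{k=1}^r M_r^{(k)}$, so the complex $(M_*,\partial_* )$ splits as the direct sum over $k=1,\dots,n$ of the subcomplexes $C^{(k)}:\ 0\to M_n^{(k)}\to M_{n-1}^{(k-1)}\to\cdots\to M_{n-k+1}^{(1)}\to 0.$
   Context: Fix $n\ge1$. For $0\le r\le n$, $M_r$ is the complex vector space with basis the injective words $a_1\cdots a_r$ of length $r$ on the alphabet $\{1,\dots,n\}$ (distinct letters), and $\partial_r:M_r\to M_{r-1}$ is $\partial_r(a_1\cdots a_r)=\sum_{j=1}^r(-1)^{j-1}a_1\cdots\widehat{a_j}\cdots a_r$. For $S\subseteq\{1,\dots,n\}$ with $|S|=r$, $M_S\subseteq M_r$ is the span of injective words whose set of letters is $S$. The symmetric group $S_r$ acts on $M_S$ by permuting positions: $\pi\cdot(w_1\cdots w_r)=w_{\pi(1)}w_{\pi(2)}\cdots w_{\pi(r)}$, extended linearly to $\mathbb{C}S_r$ (product in $\mathbb{C}S_r$ is composition). Let $e_r^{(k)}\in\mathbb{C}S_r$ ($1\le k\le r$) be the Eulerian idempotents: with permutations identified with one-line words, $S(r;k)$ the permutations of $S_r$ with exactly $k-1$ descents, $l_r^{(k)}=(-1)^{k-1}\sum_{\sigma\in S(r;k)}\mathrm{sgn}(\sigma)\sigma$, $\lambda_r^{(k)}=\sum_{t=0}^{k-1}(-1)^t\binom{r+t}{t}l_r^{(k-t)}$,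 the $e_r^{(j)}$ are defined by $(-1)^{k-1}\lambda_r^{(k)}=\sum_{j=1}^r k^je_r^{(j)}$ for all $k\ge1$. They are pairwise orthogonal idempotents summing to the identity. Set $M_S^{(k)}=e_r^{(k)}\cdot M_S$ and $M_r^{(k)}=\bigoplus_{|S|=r}M_S^{(k)}$. *)

theory Defs
  imports Complex_Main "HOL-Combinatorics.Combinatorics"
begin

definition inj_words :: "nat \<Rightarrow> nat \<Rightarrow> nat list set" where
  "inj_words n r = {w. distinct w \<and> set w \<subseteq> {1..n} \<and> length w = r}"

definition M :: "nat \<Rightarrow> nat \<Rightarrow> (nat list \<Rightarrow> complex) set" where
  "M n r = {f. \<forall>w. f w \<noteq> 0 \<longrightarrow> w \<in> inj_words n r}"

definition MS :: "nat set \<Rightarrow> (nat list \<Rightarrow> complex) set" where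
  "MS S = {f. \<forall>w. f w \<noteq> 0 \<longrightarrow> distinct w \<and> set w = S}"

definition del_at :: "nat \<Rightarrow> nat list \<Rightarrow> nat list" where
  "del_at j w = take j w @ drop (Suc j) w"

text \<open>Boundary map; position j (0-based) carries sign (-1)^j, i.e. (-1)^(j-1) for 1-based j.\<close>
definition bd :: "nat \<Rightarrow> nat \<Rightarrow> (nat list \<Rightarrow> complex) \<Rightarrow> (nat list \<Rightarrow> complex)" where
  "bd n r f = (\<lambda>v. \<Sum>w\<in>inj_words n r. f w * (\<Sum>j<r. if del_at j w = v then (-1) ^ j else 0))"

definition perm_word :: "(nat \<Rightarrow> nat) \<Rightarrow> nat list \<Rightarrow> nat list" where
  "perm_word \<sigma> w = map (\<lambda>i. w ! \<sigma> i) [0..<length w]"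

text \<open>Elements of C S_r: coefficient functions on permutations of {0..<r}.
  Linear action of such an element on a vector of M_r.\<close>
definition act :: "nat \<Rightarrow> nat \<Rightarrow> ((nat \<Rightarrow> nat) \<Rightarrow> complex) \<Rightarrow> (nat list \<Rightarrow> complex) \<Rightarrow> (nat list \<Rightarrow> complex)" where
  "act n r e f = (\<lambda>v. \<Sum>\<sigma>\<in>{\<sigma>. \<sigma> permutes {..<r}}. e \<sigma> *
      (\<Sum>w\<in>inj_words n r. if perm_word \<sigma> w = v then f w else 0))"

definition descents :: "nat \<Rightarrow> (nat \<Rightarrow> nat) \<Rightarrow> nat" where
  "descents r \<sigma> = card {i. Suc i < r \<and> \<sigma> (Suc i) < \<sigma> i}"

definition eul_l :: "nat \<Rightarrow> nat \<Rightarrow> (nat \<Rightarrow> nat) \<Rightarrow> complex" where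
  "eul_l r k \<sigma> = (if \<sigma> permutes {..<r} \<and> descents r \<sigma> = k - 1
      then (-1) ^ (k - 1) * of_int (sign \<sigma>) else 0)"

definition eul_lambda :: "nat \<Rightarrow> nat \<Rightarrow> (nat \<Rightarrow> nat) \<Rightarrow> complex" where
  "eul_lambda r k \<sigma> = (\<Sum>t=0..k-1. (-1) ^ t * of_nat ((r + t) choose t) * eul_l r (k - t) \<sigma>)"

definition euler_e :: "nat \<Rightarrow> nat \<Rightarrow> (nat \<Rightarrow> nat) \<Rightarrow> complex" where
  "euler_e r = (THE e. (\<forall>j. j \<notin> {1..r} \<longrightarrow> e j = (\<lambda>\<sigma>. 0)) \<and>
      (\<forall>k::nat. k \<ge> 1 \<longrightarrow>
         (\<lambda>\<sigma>. (-1) ^ (k - 1) * eul_lambda r k \<sigma>) = (\<lambda>\<sigma>. \<Sum>j=1..r. of_nat k ^ j * e j \<sigma>)))"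

definition MSk :: "nat \<Rightarrow> nat \<Rightarrow> nat \<Rightarrow> nat set \<Rightarrow> (nat list \<Rightarrow> complex) set" where
  "MSk n r k S = act n r (euler_e r k) ` MS S"

text \<open>M_r^(k) = sum over |S| = r of M_S^(k) (direct, supports disjoint); M_r^(0) = 0.\<close>
definition Mk :: "nat \<Rightarrow> nat \<Rightarrow> nat \<Rightarrow> (nat list \<Rightarrow> complex) set" where
  "Mk n r k = (if k = 0 then {\<lambda>_. 0} else
     {f. \<exists>g. (\<forall>S. S \<subseteq> {1..n} \<and> card S = r \<longrightarrow> g S \<in> MSk n r k S) \<and>
          f = (\<lambda>v. \<Sum>S\<in>{S. S \<subseteq> {1..n} \<and> card S = r}. g S v)})"

end

theory Submission
  imports Defs "HOL-Computational_Algebra.Polynomial"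
begin

definition Inv :: "nat \<Rightarrow> (nat \<Rightarrow> nat) \<Rightarrow> (nat \<times> nat) set" where
  "Inv r s = {(x,y). x < y \<and> y < r \<and> s y < s x}"

lemma finite_Inv: "finite (Inv r s)"
proof -
  have "Inv r s \<subseteq> {..<r} \<times> {..<r}" by (auto simp: Inv_def)
  thus ?thesis by (rule finite_subset) auto
qed

lemma permutes_lt: "s permutes {..<r} \<Longrightarrow> i < r \<Longrightarrow> s i < r"
  by (metis lessThan_iff permutes_in_image)

lemma no_descent_ge:
  assumes "s permutes {..<r}" "\<forall>i. Suc i < r \<longrightarrow> s i < s (Suc i)"
  shows "i < r \<Longrightarrow> i \<le> s i"
proof (induction i)
  case 0 then show ?case by simp
next
  case (Suc i)
  then have "i \<le> s i" by simp
  moreover have "s i < s (Suc i)" using assms(2) Suc by auto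
  ultimately show ?case by simp
qed

lemma no_descent_mono:
  assumes "\<forall>i. Suc i < r \<longrightarrow> s i < s (Suc i)"
  shows "i + t < r \<Longrightarrow> s i + t \<le> s (i + t)"
proof (induction t)
  case 0 then show ?case by simp
next
  case (Suc t)
  then have "s i + t \<le> s (i + t)" by simp
  moreover have "s (i + t) < s (Suc (i + t))" using assms Suc.prems by auto
  ultimately show ?case by simp
qed

lemma no_descent_id:
  assumes "s permutes {..<r}" "\<forall>i. Suc i < r \<longrightarrow> s i < s (Suc i)"
  shows "s = id"
proof
  fix i show "s i = id i"
  proof (cases "i < r")
    case True
    have ge: "i \<le> s i" using no_descent_ge[OF assms True] .
    show ?thesis
    proof (rule ccontr)
      assume "s i \<noteq> id i"
      then have "i < s i" using ge by simp
      have "s i + (r - 1 - i) \<le> s (i + (r - 1 - i))"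
        by (rule no_descent_mono[OF assms(2)]) (use True in simp)
      moreover have "s (r - 1) < r" using permutes_lt[OF assms(1)] True by simp
      moreover have "i + (r - 1 - i) = r - 1" using True by simp
      ultimately show False using \<open>i < s i\<close> True by simp
    qed
  next
    case False
    then show ?thesis using assms(1) by (simp add: permutes_def)
  qed
qed

lemma transpose_adj_mono:
  assumes "x < y" "(x, y) \<noteq> (i, Suc i)"
  shows "transpose i (Suc i) x < transpose i (Suc i) y"
  using assms unfolding transpose_def by (auto split: if_splits)


lemma Inv_swap:
  assumes s: "s permutes {..<r}" and i: "Suc i < r" and d: "s (Suc i) < s i"
  shows "card (Inv r (s \<circ> transpose i (Suc i))) = card (Inv r s) - 1"
    and "card (Inv r s) \<ge> 1"
proof -
  let ?t = "transpose i (Suc i)"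
  let ?f = "\<lambda>(x,y). (?t x, ?t y)"
  have mem: "(i, Suc i) \<in> Inv r s" using i d by (simp add: Inv_def)
  have bij: "bij_betw ?f (Inv r s - {(i, Suc i)}) (Inv r (s \<circ> ?t))"
  proof (rule bij_betw_byWitness[where f' = ?f])
    show "\<forall>a\<in>Inv r s - {(i, Suc i)}. ?f (?f a) = a" by auto
    show "\<forall>a'\<in>Inv r (s \<circ> ?t). ?f (?f a') = a'" by auto
    show "?f ` (Inv r s - {(i, Suc i)}) \<subseteq> Inv r (s \<circ> ?t)"
    proof (clarsimp simp: Inv_def)
      fix x y assume h: "x < y" "y < r" "s y < s x" "x = i \<longrightarrow> y \<noteq> Suc i"
      have "?t x < ?t y" using transpose_adj_mono[of x y i] h by auto
      moreover have "?t y < r" using h i by (auto simp: transpose_def)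
      ultimately show "?t x < ?t y \<and> ?t y < r" by simp
    qed
    show "?f ` Inv r (s \<circ> ?t) \<subseteq> Inv r s - {(i, Suc i)}"
    proof (clarsimp simp: Inv_def)
      fix x y assume h: "x < y" "y < r" "s (?t y) < s (?t x)"
      have ne: "(?t x, ?t y) \<noteq> (i, Suc i)"
      proof
        assume "(?t x, ?t y) = (i, Suc i)"
        then have "x = Suc i" "y = i" by (auto simp: transpose_def split: if_splits)
        then show False using h by simp
      qed
      have "(x, y) \<noteq> (i, Suc i)" using h d by auto
      then have "?t x < ?t y" using transpose_adj_mono[of x y i] h by auto
      moreover have "?t y < r" using h i by (auto simp: transpose_def)
      ultimately show "?t x < ?t y \<and> ?t y < r \<and> (?t x = i \<longrightarrow> ?t y \<noteq> Suc i)" using ne by auto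
    qed
  qed
  have "card (Inv r (s \<circ> ?t)) = card (Inv r s - {(i, Suc i)})"
    using bij_betw_same_card[OF bij] by simp
  also have "\<dots> = card (Inv r s) - 1" using mem finite_Inv by simp
  finally show "card (Inv r (s \<circ> ?t)) = card (Inv r s) - 1" .
  show "card (Inv r s) \<ge> 1" using mem finite_Inv
    by (metis One_nat_def Suc_leI card_gt_0_iff empty_iff)
qed

lemma sign_Inv:
  "s permutes {..<r} \<Longrightarrow> sign s = (-1) ^ card (Inv r s)"
proof (induction "card (Inv r s)" arbitrary: s rule: less_induct)
  case less
  show ?case
  proof (cases "\<forall>i. Suc i < r \<longrightarrow> s i < s (Suc i)")
    case True
    then have "s = id" using no_descent_id less.prems by blast
    then have "Inv r s = {}" by (auto simp: Inv_def)
    then show ?thesis using \<open>s = id\<close> by simp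
  next
    case False
    then obtain i where i: "Suc i < r" and "\<not> s i < s (Suc i)" by blast
    moreover have "s i \<noteq> s (Suc i)"
      using less.prems permutes_inj[OF less.prems] by (metis inj_eq n_not_Suc_n)
    ultimately have d: "s (Suc i) < s i" by simp
    let ?t = "transpose i (Suc i)"
    have p: "s \<circ> ?t permutes {..<r}"
      by (rule permutes_compose[OF _ less.prems]) (rule permutes_swap_id, use i in auto)
    note c = Inv_swap[OF less.prems i d]
    have "sign (s \<circ> ?t) = (-1) ^ card (Inv r (s \<circ> ?t))"
      using less.hyps[OF _ p] c by simp
    moreover have "sign (s \<circ> ?t) = - sign s"
      using sign_compose[of s ?t] less.prems permutes_imp_permutation[OF finite_lessThan]
      by (simp add: sign_swap_id permutation_swap_id)
    ultimately show ?thesis using c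
      by (metis (no_types, lifting) Suc_diff_le diff_Suc_1 minus_minus mult_minus1 power_Suc)
  qed
qed


definition ltc :: "(nat \<Rightarrow> nat) \<Rightarrow> nat \<Rightarrow> nat \<Rightarrow> bool" where
  "ltc c q p \<longleftrightarrow> c q < c p \<or> (c q = c p \<and> q < p)"

definition rk :: "nat \<Rightarrow> (nat \<Rightarrow> nat) \<Rightarrow> nat \<Rightarrow> nat" where
  "rk r c p = (if p < r then card {q. q < r \<and> ltc c q p} else p)"

definition sg :: "nat \<Rightarrow> (nat \<Rightarrow> nat) \<Rightarrow> nat \<Rightarrow> nat" where
  "sg r c = inv (rk r c)"

lemma ltc_trans: "ltc c a b \<Longrightarrow> ltc c b d \<Longrightarrow> ltc c a d"
  unfolding ltc_def by auto

lemma ltc_irrefl: "\<not> ltc c a a"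
  unfolding ltc_def by auto

lemma ltc_asym: "ltc c a b \<Longrightarrow> \<not> ltc c b a"
  unfolding ltc_def by auto

lemma ltc_total: "a \<noteq> b \<Longrightarrow> ltc c a b \<or> ltc c b a"
  unfolding ltc_def by auto

lemma rk_less_if:
  assumes "p < r" "q < r" "ltc c q p"
  shows "rk r c q < rk r c p"
proof -
  have "{x. x < r \<and> ltc c x q} \<subset> {x. x < r \<and> ltc c x p}"
    using assms ltc_trans ltc_irrefl by blast
  then have "card {x. x < r \<and> ltc c x q} < card {x. x < r \<and> ltc c x p}"
    by (rule psubset_card_mono[rotated]) auto
  then show ?thesis using assms by (simp add: rk_def)
qed

lemma rk_lt_iff:
  assumes "p < r" "q < r"
  shows "rk r c q < rk r c p \<longleftrightarrow> ltc c q p"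
proof
  assume h: "rk r c q < rk r c p"
  show "ltc c q p"
  proof (rule ccontr)
    assume "\<not> ltc c q p"
    then have "q = p \<or> ltc c p q" using ltc_total by blast
    then show False using h rk_less_if[OF assms(2,1), of c] by auto
  qed
qed (rule rk_less_if[OF assms])

lemma rk_bound: "p < r \<Longrightarrow> rk r c p < r"
proof -
  assume p: "p < r"
  have "{q. q < r \<and> ltc c q p} \<subseteq> {..<r} - {p}" using ltc_irrefl by auto
  then have "card {q. q < r \<and> ltc c q p} \<le> card ({..<r} - {p})"
    by (rule card_mono[rotated]) auto
  also have "\<dots> < r" using p by simp
  finally show ?thesis using p by (simp add: rk_def)
qed

lemma rk_inj: "inj_on (rk r c) {..<r}"
proof (rule inj_onI)
  fix p q assume "p \<in> {..<r}" "q \<in> {..<r}" "rk r c p = rk r c q"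
  then show "p = q" using rk_less_if[of p r q c] rk_less_if[of q r p c] ltc_total[of p q c]
    by force
qed

lemma rk_permutes: "rk r c permutes {..<r}"
proof (rule bij_imp_permutes)
  have "rk r c ` {..<r} \<subseteq> {..<r}" using rk_bound by auto
  then have "rk r c ` {..<r} = {..<r}" using endo_inj_surj[OF finite_lessThan _ rk_inj] by blast
  then show "bij_betw (rk r c) {..<r} {..<r}" using rk_inj by (simp add: bij_betw_def)
  show "\<And>x. x \<notin> {..<r} \<Longrightarrow> rk r c x = x" by (simp add: rk_def)
qed

lemma sg_permutes: "sg r c permutes {..<r}"
  unfolding sg_def by (rule permutes_inv[OF rk_permutes])

lemma rk_sg: "rk r c (sg r c i) = i"
  unfolding sg_def by (meson permutes_inverses(1) rk_permutes)

lemma sg_rk: "sg r c (rk r c i) = i"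
  unfolding sg_def by (meson permutes_inverses(2) rk_permutes)

lemma chain_ltc:
  assumes "\<forall>i. Suc i < r \<longrightarrow> ltc c (s i) (s (Suc i))"
  shows "i < j \<Longrightarrow> j < r \<Longrightarrow> ltc c (s i) (s j)"
proof (induction j)
  case 0 then show ?case by simp
next
  case (Suc j)
  show ?case
  proof (cases "i = j")
    case True then show ?thesis using assms Suc.prems by auto
  next
    case False
    then have "ltc c (s i) (s j)" using Suc by auto
    then show ?thesis using assms Suc.prems ltc_trans by blast
  qed
qed

lemma sg_eq_iff:
  assumes s: "s permutes {..<r}"
  shows "sg r c = s \<longleftrightarrow> (\<forall>i. Suc i < r \<longrightarrow> ltc c (s i) (s (Suc i)))"
proof
  assume h: "sg r c = s"
  show "\<forall>i. Suc i < r \<longrightarrow> ltc c (s i) (s (Suc i))"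
  proof (intro allI impI)
    fix i assume i: "Suc i < r"
    have "rk r c (s i) < rk r c (s (Suc i))" using rk_sg[of r c] h by simp
    moreover have "s i < r" "s (Suc i) < r" using permutes_lt[OF s] i by auto
    ultimately show "ltc c (s i) (s (Suc i))" using rk_lt_iff by blast
  qed
next
  assume ch: "\<forall>i. Suc i < r \<longrightarrow> ltc c (s i) (s (Suc i))"
  have rks: "rk r c (s i) = i" if i: "i < r" for i
  proof -
    have "{q. q < r \<and> ltc c q (s i)} = s ` {..<i}"
    proof
      show "s ` {..<i} \<subseteq> {q. q < r \<and> ltc c q (s i)}"
        using chain_ltc[OF ch] i permutes_lt[OF s] by auto
      show "{q. q < r \<and> ltc c q (s i)} \<subseteq> s ` {..<i}"
      proof clarify
        fix q assume q: "q < r" "ltc c q (s i)"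
        obtain j where j: "j < r" "q = s j"
          using q(1) permutes_surj[OF s] by (metis imageE lessThan_iff permutes_image s)
        have "j < i"
        proof (rule ccontr)
          assume "\<not> j < i"
          then have "j = i \<or> i < j" by auto
          then show False using q j chain_ltc[OF ch, of i j] ltc_irrefl ltc_asym by blast
        qed
        then show "q \<in> s ` {..<i}" using j by auto
      qed
    qed
    moreover have "card (s ` {..<i}) = i"
      using card_image[OF inj_on_subset[OF permutes_inj[OF s]]] by simp
    moreover have "s i < r" using permutes_lt[OF s i] .
    ultimately show ?thesis by (simp add: rk_def)
  qed
  show "sg r c = s"
  proof
    fix x show "sg r c x = s x"
    proof (cases "x < r")
      case True
      then show ?thesis unfolding sg_def
        using permutes_inv_eq[OF rk_permutes] rks by blast
    next
      case False
      then show ?thesis using permutes_not_in[OF sg_permutes] permutes_not_in[OF s] by simp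
    qed
  qed
qed


definition okl :: "(nat \<Rightarrow> nat) \<Rightarrow> nat list \<Rightarrow> bool" where
  "okl d xs \<longleftrightarrow> (\<forall>i. Suc i < length xs \<longrightarrow> xs ! i + d i \<le> xs ! Suc i)"

definition Ls :: "(nat \<Rightarrow> nat) \<Rightarrow> nat \<Rightarrow> nat \<Rightarrow> nat list set" where
  "Ls d r k = {xs. length xs = r \<and> set xs \<subseteq> {..<k} \<and> okl d xs}"

lemma finite_Ls: "finite (Ls d r k)"
proof -
  have "Ls d r k \<subseteq> {xs. set xs \<subseteq> {..<k} \<and> length xs = r}" by (auto simp: Ls_def)
  then show ?thesis by (rule finite_subset) (rule finite_lists_length_eq, simp)
qed

lemma okl_le_last:
  assumes "okl d xs" "i < length xs"
  shows "xs ! i \<le> last xs"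
proof -
  have "xs ! i \<le> xs ! (i + t)" if "i + t < length xs" for t
    using that
  proof (induction t)
    case 0 then show ?case by simp
  next
    case (Suc t)
    then have "xs ! i \<le> xs ! (i + t)" by simp
    moreover have "xs ! (i + t) + d (i + t) \<le> xs ! Suc (i + t)"
      using assms(1) Suc.prems unfolding okl_def by simp
    ultimately show ?case by simp
  qed
  from this[of "length xs - 1 - i"] assms(2) have "xs ! i \<le> xs ! (length xs - 1)" by simp
  moreover have "xs \<noteq> []" using assms(2) by auto
  ultimately show ?thesis by (simp add: last_conv_nth)
qed

lemma okl_snoc:
  assumes ne: "xs \<noteq> []"
  shows "okl d (xs @ [v]) \<longleftrightarrow> okl d xs \<and> last xs + d (length xs - 1) \<le> v"
proof -
  {
    assume h: "okl d (xs @ [v])"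
    have "okl d xs"
      unfolding okl_def
    proof (intro allI impI)
      fix i assume i: "Suc i < length xs"
      have "(xs @ [v]) ! i + d i \<le> (xs @ [v]) ! Suc i" using h i unfolding okl_def by simp
      then show "xs ! i + d i \<le> xs ! Suc i" using i by (simp add: nth_append)
    qed
    moreover have "last xs + d (length xs - 1) \<le> v"
    proof -
      have "Suc (length xs - 1) < length (xs @ [v])" using ne by simp
      then have "(xs @ [v]) ! (length xs - 1) + d (length xs - 1) \<le> (xs @ [v]) ! Suc (length xs - 1)"
        using h unfolding okl_def by blast
      then show ?thesis using ne by (simp add: nth_append last_conv_nth)
    qed
    ultimately have "okl d xs \<and> last xs + d (length xs - 1) \<le> v" by simp
  }
  moreover
  {
    assume h: "okl d xs" "last xs + d (length xs - 1) \<le> v"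
    have "okl d (xs @ [v])"
      unfolding okl_def
    proof (intro allI impI)
      fix i assume i: "Suc i < length (xs @ [v])"
      show "(xs @ [v]) ! i + d i \<le> (xs @ [v]) ! Suc i"
      proof (cases "Suc i < length xs")
        case True then show ?thesis using h(1) unfolding okl_def by (simp add: nth_append)
      next
        case False
        then have "i = length xs - 1" "Suc i = length xs" using i by auto
        then show ?thesis using h(2) ne by (simp add: nth_append last_conv_nth)
      qed
    qed
  }
  ultimately show "okl d (xs @ [v]) \<longleftrightarrow> okl d xs \<and> last xs + d (length xs - 1) \<le> v" by blast
qed

lemma hockey:
  "(\<Sum>v<k. if E \<le> v then (r + v - E) choose r else 0) =
     (if E < k then (r + k - E) choose Suc r else (0::nat))"
proof (induction k)
  case 0 then show ?case by simp
next
  case (Suc k)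
  show ?case
  proof (cases "E \<le> k")
    case True
    show ?thesis
    proof (cases "E = k")
      case True then show ?thesis using Suc by simp
    next
      case False
      then have "E < k" using True by simp
      then have "r + Suc k - E = Suc (r + k - E)" by simp
      then show ?thesis using Suc \<open>E < k\<close> by simp
    qed
  next
    case False then show ?thesis using Suc by simp
  qed
qed

definition Dsum :: "(nat \<Rightarrow> nat) \<Rightarrow> nat \<Rightarrow> nat" where
  "Dsum d r = (\<Sum>i<r - 1. d i)"

lemma card_Ls:
  assumes "r \<ge> 1"
  shows "card (Ls d r k) = (if Dsum d r < k then (r + k - 1 - Dsum d r) choose r else 0)"
  using assms
proof (induction r arbitrary: k rule: nat_induct_at_least)
  case base
  have "Ls d 1 k = (\<lambda>v. [v]) ` {..<k}"
    by (auto simp: Ls_def okl_def length_Suc_conv)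
  then have "card (Ls d 1 k) = k" by (simp add: card_image inj_on_def)
  then show ?case by (simp add: Dsum_def)
next
  case (Suc r)
  let ?e = "d (r - 1)"
  let ?D = "Dsum d r"
  have eq: "Ls d (Suc r) k = (\<Union>v\<in>{..<k}. (\<lambda>xs. xs @ [v]) ` Ls d r (Suc v - ?e))"
  proof
    show "Ls d (Suc r) k \<subseteq> (\<Union>v\<in>{..<k}. (\<lambda>xs. xs @ [v]) ` Ls d r (Suc v - ?e))"
    proof
      fix ys assume ys: "ys \<in> Ls d (Suc r) k"
      then obtain xs v where yv: "ys = xs @ [v]" "length xs = r"
        by (auto simp: Ls_def length_Suc_conv_rev)
      have ne: "xs \<noteq> []" using yv Suc.hyps by auto
      have v: "v < k" using ys yv by (auto simp: Ls_def)
      have ok: "okl d xs" "last xs + ?e \<le> v" using ys yv okl_snoc[OF ne] by (auto simp: Ls_def)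
      have "set xs \<subseteq> {..<Suc v - ?e}"
      proof
        fix x assume "x \<in> set xs"
        then obtain i where "i < length xs" "x = xs ! i" by (auto simp: in_set_conv_nth)
        then have "x \<le> last xs" using okl_le_last ok by simp
        then show "x \<in> {..<Suc v - ?e}" using ok by auto
      qed
      then show "ys \<in> (\<Union>v\<in>{..<k}. (\<lambda>xs. xs @ [v]) ` Ls d r (Suc v - ?e))"
        using yv v ok by (auto simp: Ls_def)
    qed
    show "(\<Union>v\<in>{..<k}. (\<lambda>xs. xs @ [v]) ` Ls d r (Suc v - ?e)) \<subseteq> Ls d (Suc r) k"
    proof clarify
      fix v xs assume v: "v < k" and xs: "xs \<in> Ls d r (Suc v - ?e)"
      have ne: "xs \<noteq> []" using xs Suc.hyps by (auto simp: Ls_def)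
      have "last xs \<in> set xs" using ne by simp
      then have "last xs < Suc v - ?e" using xs by (auto simp: Ls_def)
      then have "last xs + ?e \<le> v" by simp
      then have "okl d (xs @ [v])" using okl_snoc[OF ne] xs by (auto simp: Ls_def)
      moreover have "set xs \<subseteq> {..<k}" using xs v by (auto simp: Ls_def)
      ultimately show "xs @ [v] \<in> Ls d (Suc r) k" using xs v by (auto simp: Ls_def)
    qed
  qed
  have "card (Ls d (Suc r) k) = (\<Sum>v<k. card ((\<lambda>xs. xs @ [v]) ` Ls d r (Suc v - ?e)))"
    unfolding eq
    by (rule card_UN_disjoint) (auto simp: finite_Ls)
  also have "\<dots> = (\<Sum>v<k. card (Ls d r (Suc v - ?e)))"
    by (rule sum.cong) (auto simp: card_image inj_on_def)
  also have "\<dots> = (\<Sum>v<k. if ?D + ?e \<le> v then (r + v - (?D + ?e)) choose r else 0)"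
  proof (rule sum.cong[OF refl])
    fix v
    show "card (Ls d r (Suc v - ?e)) = (if ?D + ?e \<le> v then (r + v - (?D + ?e)) choose r else 0)"
      unfolding Suc.IH
    proof -
      have "(?D < Suc v - ?e) = (?D + ?e \<le> v)" by auto
      moreover have "?D + ?e \<le> v \<Longrightarrow> r + (Suc v - ?e) - 1 - ?D = r + v - (?D + ?e)" by auto
      ultimately show "(if ?D < Suc v - ?e then (r + (Suc v - ?e) - 1 - ?D) choose r else 0) =
          (if ?D + ?e \<le> v then (r + v - (?D + ?e)) choose r else 0)" by simp
    qed
  qed
  also have "\<dots> = (if ?D + ?e < k then (r + k - (?D + ?e)) choose Suc r else 0)"
    by (rule hockey)
  also have "?D + ?e = Dsum d (Suc r)"
  proof -
    have "{..<r} = insert (r - 1) {..<r - 1}" using Suc.hyps by auto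
    then show ?thesis unfolding Dsum_def by (simp add: add.commute)
  qed
  finally show ?case by simp
qed


definition Cs :: "nat \<Rightarrow> nat \<Rightarrow> (nat \<Rightarrow> nat) set" where
  "Cs r k = Pi\<^sub>E {..<r} (\<lambda>_. {..<k})"

lemma finite_Cs: "finite (Cs r k)"
  unfolding Cs_def by (rule finite_PiE) auto

definition dl :: "(nat \<Rightarrow> nat) \<Rightarrow> nat \<Rightarrow> nat" where
  "dl s i = (if s (Suc i) < s i then 1 else 0)"

lemma Dsum_dl: "Dsum (dl s) r = descents r s"
proof -
  have "Dsum (dl s) r = card ({..<r - 1} \<inter> {i. s (Suc i) < s i})"
    unfolding Dsum_def dl_def by (simp add: sum.If_cases)
  also have "{..<r - 1} \<inter> {i. s (Suc i) < s i} = {i. Suc i < r \<and> s (Suc i) < s i}" by auto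
  finally show ?thesis by (simp add: descents_def)
qed

lemma ltc_dl:
  assumes s: "s permutes {..<r}" and i: "Suc i < r"
  shows "ltc c (s i) (s (Suc i)) \<longleftrightarrow> c (s i) + dl s i \<le> c (s (Suc i))"
proof -
  have "s i \<noteq> s (Suc i)" using permutes_inj[OF s] by (metis inj_eq n_not_Suc_n)
  then show ?thesis unfolding ltc_def dl_def by auto
qed

lemma fiber_card:
  assumes s: "s permutes {..<r}" and r: "r \<ge> 1"
  shows "card {c \<in> Cs r k. sg r c = s} =
           (if descents r s < k then (r + k - 1 - descents r s) choose r else 0)"
proof -
  let ?F = "{c \<in> Cs r k. sg r c = s}"
  let ?f1 = "\<lambda>c. map (\<lambda>i. c (s i)) [0..<r]"
  let ?f2 = "\<lambda>xs. (\<lambda>p. if p < r then xs ! (inv s p) else undefined)"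
  have sl: "s i < r" if "i < r" for i using permutes_lt[OF s that] .
  have il: "inv s p < r" if "p < r" for p using permutes_lt[OF permutes_inv[OF s] that] .
  have bij: "bij_betw ?f1 ?F (Ls (dl s) r k)"
  proof (rule bij_betw_byWitness[where f' = ?f2])
    show "\<forall>c\<in>?F. ?f2 (?f1 c) = c"
    proof
      fix c assume c: "c \<in> ?F"
      show "?f2 (?f1 c) = c"
      proof
        fix p show "?f2 (?f1 c) p = c p"
          using c il permutes_inverses(1)[OF s] by (auto simp: Cs_def PiE_def extensional_def)
      qed
    qed
    show "\<forall>xs\<in>Ls (dl s) r k. ?f1 (?f2 xs) = xs"
    proof
      fix xs assume xs: "xs \<in> Ls (dl s) r k"
      show "?f1 (?f2 xs) = xs"
        using xs sl permutes_inverses(2)[OF s] by (auto simp: Ls_def intro: nth_equalityI)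
    qed
    show "?f1 ` ?F \<subseteq> Ls (dl s) r k"
    proof
      fix ys assume "ys \<in> ?f1 ` ?F"
      then obtain c where c: "c \<in> ?F" "ys = ?f1 c" by blast
      have ch: "\<forall>i. Suc i < r \<longrightarrow> ltc c (s i) (s (Suc i))" using c sg_eq_iff[OF s] by blast
      have "set ys \<subseteq> {..<k}" using c sl by (auto simp: Cs_def PiE_def Pi_def)
      moreover have "okl (dl s) ys"
        unfolding okl_def using c(2) ch ltc_dl[OF s] by auto
      ultimately show "ys \<in> Ls (dl s) r k" using c by (simp add: Ls_def)
    qed
    show "?f2 ` Ls (dl s) r k \<subseteq> ?F"
    proof
      fix c assume "c \<in> ?f2 ` Ls (dl s) r k"
      then obtain xs where xs: "xs \<in> Ls (dl s) r k" "c = ?f2 xs" by blast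
      have cs: "c (s i) = xs ! i" if "i < r" for i
        using xs that sl permutes_inverses(2)[OF s] by auto
      have "xs ! (inv s p) < k" if "p < r" for p
      proof -
        have "inv s p < length xs" using xs il[OF that] by (simp add: Ls_def)
        then have "xs ! (inv s p) \<in> set xs" by (rule nth_mem)
        then show ?thesis using xs by (auto simp: Ls_def)
      qed
      then have "c \<in> Cs r k"
        using xs by (auto simp: Cs_def PiE_def extensional_def)
      moreover have "\<forall>i. Suc i < r \<longrightarrow> ltc c (s i) (s (Suc i))"
      proof (intro allI impI)
        fix i assume i: "Suc i < r"
        have "xs ! i + dl s i \<le> xs ! Suc i" using xs i by (auto simp: Ls_def okl_def)
        then show "ltc c (s i) (s (Suc i))" using ltc_dl[OF s i] cs i by simp
      qed
      ultimately show "c \<in> ?F" using sg_eq_iff[OF s] by blast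
    qed
  qed
  have "card ?F = card (Ls (dl s) r k)" using bij_betw_same_card[OF bij] .
  also have "\<dots> = (if descents r s < k then (r + k - 1 - descents r s) choose r else 0)"
    using card_Ls[OF r, of "dl s" k] unfolding Dsum_dl .
  finally show ?thesis .
qed

lemma Phi_closed:
  assumes k: "k \<ge> 1"
  shows "(-1) ^ (k - 1) * eul_lambda r k s =
    (if s permutes {..<r} \<and> descents r s < k
     then of_int (sign s) * of_nat ((r + k - 1 - descents r s) choose r) else 0)"
proof -
  let ?d = "descents r s"
  let ?P = "s permutes {..<r} \<and> ?d < k"
  let ?X = "(if ?P then (-1) ^ (k - 1) * of_nat ((r + k - 1 - ?d) choose r) * of_int (sign s) else 0 :: complex)"
  have "eul_lambda r k s = (\<Sum>t\<in>{0..k-1}. if t = k - 1 - ?d then ?X else 0)"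
    unfolding eul_lambda_def
  proof (rule sum.cong[OF refl])
    fix t assume t: "t \<in> {0..k-1}"
    show "(-1) ^ t * of_nat ((r + t) choose t) * eul_l r (k - t) s = (if t = k - 1 - ?d then ?X else 0)"
    proof (cases "t = k - 1 - ?d \<and> ?P")
      case True
      then have e1: "k - t - 1 = ?d" using t by auto
      have e2: "(r + t) choose t = (r + k - 1 - ?d) choose r"
        using binomial_symmetric[of t "r + t"] True by (simp add: add.commute)
      have e3: "(-1) ^ t * (-1) ^ (k - t - 1) = ((-1) ^ (k - 1) :: complex)"
      proof -
        have "t + (k - t - 1) = k - 1" using t by simp
        then show ?thesis by (simp add: power_add[symmetric])
      qed
      have "(-1) ^ t * of_nat ((r + t) choose t) * eul_l r (k - t) s
          = ((-1) ^ t * (-1) ^ (k - t - 1)) * of_nat ((r + k - 1 - ?d) choose r) * of_int (sign s)"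
        unfolding eul_l_def using True e1 e2 by simp
      also have "\<dots> = ?X" using True e3 by simp
      finally show ?thesis using True by simp
    next
      case False
      have "\<not> (s permutes {..<r} \<and> ?d = k - t - 1)" using False t k by auto
      then have "eul_l r (k - t) s = 0" unfolding eul_l_def by auto
      then show ?thesis using False by auto
    qed
  qed
  also have "\<dots> = ?X"
  proof -
    have "k - 1 - ?d \<in> {0..k-1}" by simp
    then show ?thesis by (subst sum.delta) auto
  qed
  finally have "(-1) ^ (k - 1) * eul_lambda r k s = (-1) ^ (k - 1) * ?X" by simp
  also have "\<dots> = (if ?P then of_int (sign s) * of_nat ((r + k - 1 - ?d) choose r) else 0)"
    by (simp add: power_add[symmetric] mult_ac)
  finally show ?thesis .
qed

definition lin :: "nat list set \<Rightarrow> (nat list \<Rightarrow> nat list \<Rightarrow> complex) \<Rightarrow> (nat list \<Rightarrow> complex) \<Rightarrow> (nat list \<Rightarrow> complex)" where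
  "lin W K f = (\<lambda>v. \<Sum>w\<in>W. f w * K w v)"

definition Kact :: "nat \<Rightarrow> ((nat \<Rightarrow> nat) \<Rightarrow> complex) \<Rightarrow> nat list \<Rightarrow> nat list \<Rightarrow> complex" where
  "Kact r e w v = (\<Sum>s\<in>{s. s permutes {..<r}}. e s * (if perm_word s w = v then 1 else 0))"

definition KSh :: "nat \<Rightarrow> nat \<Rightarrow> nat list \<Rightarrow> nat list \<Rightarrow> complex" where
  "KSh r k w v = (\<Sum>c\<in>Cs r k. of_int (sign (sg r c)) * (if perm_word (sg r c) w = v then 1 else 0))"

lemma act_lin: "act n r e f = lin (inj_words n r) (Kact r e) f"
proof
  fix v
  have "act n r e f v = (\<Sum>s\<in>{s. s permutes {..<r}}. \<Sum>w\<in>inj_words n r. e s * (if perm_word s w = v then f w else 0))"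
    unfolding act_def by (simp add: sum_distrib_left)
  also have "\<dots> = (\<Sum>w\<in>inj_words n r. \<Sum>s\<in>{s. s permutes {..<r}}. e s * (if perm_word s w = v then f w else 0))"
    by (rule sum.swap)
  also have "\<dots> = lin (inj_words n r) (Kact r e) f v"
    unfolding lin_def Kact_def by (simp add: sum_distrib_left mult_ac if_distrib cong: if_cong)
  finally show "act n r e f v = lin (inj_words n r) (Kact r e) f v" .
qed

lemma Kact_Phi:
  assumes k: "k \<ge> 1" and r: "r \<ge> 1"
  shows "Kact r (\<lambda>s. (-1) ^ (k - 1) * eul_lambda r k s) w v = KSh r k w v"
proof -
  let ?P = "{s. s permutes {..<r}}"
  let ?I = "\<lambda>s. (if perm_word s w = v then 1 else 0 :: complex)"
  have "Kact r (\<lambda>s. (-1) ^ (k - 1) * eul_lambda r k s) w v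
      = (\<Sum>s\<in>?P. of_nat (card {c \<in> Cs r k. sg r c = s}) * (of_int (sign s) * ?I s))"
    unfolding Kact_def
  proof (rule sum.cong[OF refl])
    fix s assume s: "s \<in> ?P"
    show "(-1) ^ (k - 1) * eul_lambda r k s * ?I s =
          of_nat (card {c \<in> Cs r k. sg r c = s}) * (of_int (sign s) * ?I s)"
      unfolding Phi_closed[OF k] fiber_card[OF s[simplified] r] using s by auto
  qed
  also have "\<dots> = (\<Sum>s\<in>?P. \<Sum>c\<in>{c \<in> Cs r k. sg r c = s}. of_int (sign (sg r c)) * ?I (sg r c))"
    by (rule sum.cong[OF refl]) simp
  also have "\<dots> = (\<Sum>c\<in>Cs r k. of_int (sign (sg r c)) * ?I (sg r c))"
    by (rule sum.group) (auto simp: finite_Cs finite_permutations sg_permutes)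
  also have "\<dots> = KSh r k w v" unfolding KSh_def by simp
  finally show ?thesis .
qed

lemma lin_cong: "(\<And>w v. w \<in> W \<Longrightarrow> K w v = K' w v) \<Longrightarrow> lin W K f = lin W K' f"
  unfolding lin_def by (intro ext sum.cong) auto

lemma act_Phi_Sh:
  assumes k: "k \<ge> 1" and r: "r \<ge> 1"
  shows "act n r (\<lambda>s. (-1) ^ (k - 1) * eul_lambda r k s) f = lin (inj_words n r) (KSh r k) f"
  unfolding act_lin using Kact_Phi[OF k r] by (intro lin_cong) simp


lemma finite_inj_words: "finite (inj_words n r)"
proof -
  have "inj_words n r \<subseteq> {xs. set xs \<subseteq> {1..n} \<and> length xs = r}" by (auto simp: inj_words_def)
  then show ?thesis by (rule finite_subset) (rule finite_lists_length_eq, simp)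
qed

lemma perm_word_length [simp]: "length (perm_word s w) = length w"
  by (simp add: perm_word_def)

lemma perm_word_nth: "i < length w \<Longrightarrow> perm_word s w ! i = w ! s i"
  by (simp add: perm_word_def)

lemma perm_word_in:
  assumes w: "w \<in> inj_words n r" and s: "s permutes {..<r}"
  shows "perm_word s w \<in> inj_words n r"
proof -
  have lw: "length w = r" using w by (simp add: inj_words_def)
  have "distinct (perm_word s w)"
    unfolding distinct_conv_nth
  proof (intro allI impI)
    fix i j assume "i < length (perm_word s w)" "j < length (perm_word s w)" "i \<noteq> j"
    then have ij: "i < r" "j < r" "i \<noteq> j" using lw by auto
    then have "s i \<noteq> s j" using permutes_inj[OF s] by (meson inj_eq)
    moreover have "s i < r" "s j < r" using ij permutes_lt[OF s] by auto
    ultimately show "perm_word s w ! i \<noteq> perm_word s w ! j"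
      using w ij lw by (simp add: perm_word_nth inj_words_def nth_eq_iff_index_eq)
  qed
  moreover have "set (perm_word s w) \<subseteq> set w"
    using permutes_lt[OF s] lw by (auto simp: perm_word_def)
  ultimately show ?thesis using w lw by (auto simp: inj_words_def)
qed

lemma perm_word_comp:
  assumes lw: "length w = r" and t: "t permutes {..<r}"
  shows "perm_word t (perm_word s w) = perm_word (s \<circ> t) w"
  using lw permutes_lt[OF t] by (auto simp: perm_word_def intro!: nth_equalityI)

lemma perm_word_id [simp]: "perm_word id w = w"
  by (auto simp: perm_word_def intro: nth_equalityI)

lemma lin_comp:
  assumes "finite W1" "finite W2"
  shows "lin W2 K2 (lin W1 K1 f) = lin W1 (\<lambda>w v. \<Sum>u\<in>W2. K1 w u * K2 u v) f"
proof
  fix v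
  have "lin W2 K2 (lin W1 K1 f) v = (\<Sum>u\<in>W2. \<Sum>w\<in>W1. f w * K1 w u * K2 u v)"
    unfolding lin_def by (simp add: sum_distrib_right)
  also have "\<dots> = (\<Sum>w\<in>W1. \<Sum>u\<in>W2. f w * K1 w u * K2 u v)" by (rule sum.swap)
  also have "\<dots> = lin W1 (\<lambda>w v. \<Sum>u\<in>W2. K1 w u * K2 u v) f v"
    unfolding lin_def by (simp add: sum_distrib_left mult.assoc)
  finally show "lin W2 K2 (lin W1 K1 f) v = lin W1 (\<lambda>w v. \<Sum>u\<in>W2. K1 w u * K2 u v) f v" .
qed

lemma collapse:
  assumes "finite W" "x \<in> W"
  shows "(\<Sum>u\<in>W. (if x = u then 1 else 0) * g u) = (g x :: complex)"
proof -
  have "(\<Sum>u\<in>W. (if x = u then 1 else 0) * g u) = (\<Sum>u\<in>W. if x = u then g u else 0)"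
    by (rule sum.cong) auto
  also have "\<dots> = g x" using assms by simp
  finally show ?thesis .
qed

lemma Cs_I: "(\<And>p. p < r \<Longrightarrow> c p < k) \<Longrightarrow> (\<And>p. \<not> p < r \<Longrightarrow> c p = undefined) \<Longrightarrow> c \<in> Cs r k"
  unfolding Cs_def PiE_iff extensional_def by auto

lemma Cs_D: "c \<in> Cs r k \<Longrightarrow> p < r \<Longrightarrow> c p < k"
  unfolding Cs_def by auto

lemma Cs_D2: "c \<in> Cs r k \<Longrightarrow> \<not> p < r \<Longrightarrow> c p = undefined"
  unfolding Cs_def PiE_iff extensional_def by auto

definition comb :: "nat \<Rightarrow> nat \<Rightarrow> (nat \<Rightarrow> nat) \<Rightarrow> (nat \<Rightarrow> nat) \<Rightarrow> nat \<Rightarrow> nat" where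
  "comb r m c c' = (\<lambda>p. if p < r then c' (rk r c p) * m + c p else undefined)"

lemma nat_lex_less:
  fixes a b x y m :: nat
  assumes "x < m" "y < m"
  shows "a * m + x < b * m + y \<longleftrightarrow> a < b \<or> (a = b \<and> x < y)"
proof (cases a b rule: linorder_cases)
  case less
  then have "a * m + x < (a + 1) * m" using assms by simp
  also have "\<dots> \<le> b * m" using less by (intro mult_le_mono1) simp
  finally show ?thesis using less by simp
next
  case equal then show ?thesis by simp
next
  case greater
  then have "b * m + y < (b + 1) * m" using assms by simp
  also have "\<dots> \<le> a * m" using greater by (intro mult_le_mono1) simp
  finally show ?thesis using greater by simp
qed

lemma nat_lex_eq:
  fixes a b x y m :: nat
  assumes "x < m" "y < m"
  shows "a * m + x = b * m + y \<longleftrightarrow> a = b \<and> x = y"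
  using nat_lex_less[OF assms, of a b] nat_lex_less[OF assms(2,1), of b a] by auto

lemma ltc_comb:
  assumes c: "c \<in> Cs r m" and p: "p < r" and q: "q < r"
  shows "ltc (comb r m c c') q p \<longleftrightarrow> ltc c' (rk r c q) (rk r c p)"
proof -
  have cm: "c p < m" "c q < m" using c p q by (auto simp: Cs_def)
  have "ltc (comb r m c c') q p \<longleftrightarrow>
        c' (rk r c q) < c' (rk r c p) \<or> (c' (rk r c q) = c' (rk r c p) \<and> ltc c q p)"
    unfolding ltc_def comb_def using p q nat_lex_less[OF cm(2,1)] nat_lex_eq[OF cm(2,1)] by auto
  also have "\<dots> \<longleftrightarrow> ltc c' (rk r c q) (rk r c p)"
    unfolding ltc_def[of c'] using rk_lt_iff[OF p q, of c] by auto
  finally show ?thesis .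
qed

lemma rk_comb:
  assumes c: "c \<in> Cs r m"
  shows "rk r (comb r m c c') p = rk r c' (rk r c p)"
proof (cases "p < r")
  case True
  have rb: "rk r c p < r" using rk_bound[OF True] .
  have "{q. q < r \<and> ltc (comb r m c c') q p} = {q. q < r \<and> ltc c' (rk r c q) (rk r c p)}"
    using ltc_comb[OF c True] by auto
  moreover have "rk r c ` {q. q < r \<and> ltc c' (rk r c q) (rk r c p)} = {q'. q' < r \<and> ltc c' q' (rk r c p)}"
  proof
    show "rk r c ` {q. q < r \<and> ltc c' (rk r c q) (rk r c p)} \<subseteq> {q'. q' < r \<and> ltc c' q' (rk r c p)}"
      using rk_bound by auto
    show "{q'. q' < r \<and> ltc c' q' (rk r c p)} \<subseteq> rk r c ` {q. q < r \<and> ltc c' (rk r c q) (rk r c p)}"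
    proof clarify
      fix q' assume q': "q' < r" "ltc c' q' (rk r c p)"
      have "sg r c q' < r" using permutes_lt[OF sg_permutes q'(1)] .
      then show "q' \<in> rk r c ` {q. q < r \<and> ltc c' (rk r c q) (rk r c p)}"
        using q' rk_sg[of r c q'] by (metis (mono_tags, lifting) image_eqI mem_Collect_eq)
    qed
  qed
  moreover have "inj_on (rk r c) {q. q < r \<and> ltc c' (rk r c q) (rk r c p)}"
    using rk_inj by (rule inj_on_subset) auto
  ultimately have "card {q. q < r \<and> ltc (comb r m c c') q p} = card {q'. q' < r \<and> ltc c' q' (rk r c p)}"
    by (metis card_image)
  then show ?thesis using True rb by (simp add: rk_def)
next
  case False then show ?thesis by (simp add: rk_def)
qed

lemma sg_comb:
  assumes c: "c \<in> Cs r m"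
  shows "sg r (comb r m c c') = sg r c \<circ> sg r c'"
proof -
  have "rk r (comb r m c c') = rk r c' \<circ> rk r c" using rk_comb[OF c] by auto
  then have "sg r (comb r m c c') = inv (rk r c' \<circ> rk r c)" by (simp add: sg_def)
  also have "\<dots> = inv (rk r c) \<circ> inv (rk r c')"
    by (rule o_inv_distrib) (auto intro: permutes_bij rk_permutes)
  finally show ?thesis by (simp add: sg_def)
qed

lemma comb_bij:
  assumes m: "m \<ge> 1"
  shows "bij_betw (\<lambda>(c, c'). comb r m c c') (Cs r m \<times> Cs r k) (Cs r (k * m))"
proof -
  define d1 where "d1 = (\<lambda>c''. (\<lambda>p. if p < r then c'' p mod m else undefined) :: nat \<Rightarrow> nat)"
  define dec where "dec = (\<lambda>c''. (d1 c'', (\<lambda>q. if q < r then c'' (sg r (d1 c'') q) div m else undefined)))"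
  show ?thesis
  proof (rule bij_betw_byWitness[where f' = dec])
    show "\<forall>a\<in>Cs r m \<times> Cs r k. dec ((\<lambda>(c, c'). comb r m c c') a) = a"
    proof clarify
      fix c c' assume c: "c \<in> Cs r m" and c': "c' \<in> Cs r k"
      have 1: "d1 (comb r m c c') = c"
      proof
        fix p show "d1 (comb r m c c') p = c p"
        proof (cases "p < r")
          case True
          then have "c p < m" using c by (auto simp: Cs_def PiE_def Pi_def)
          then show ?thesis using True by (simp add: d1_def comb_def)
        next
          case False
          then show ?thesis using c by (auto simp: d1_def Cs_def PiE_def extensional_def)
        qed
      qed
      have 2: "(\<lambda>q. if q < r then comb r m c c' (sg r c q) div m else undefined) = c'"
      proof
        fix q show "(if q < r then comb r m c c' (sg r c q) div m else undefined) = c' q"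
        proof (cases "q < r")
          case True
          have "sg r c q < r" using permutes_lt[OF sg_permutes True] .
          moreover have "c (sg r c q) < m" using c calculation by (auto simp: Cs_def)
          ultimately show ?thesis using True by (simp add: comb_def rk_sg)
        next
          case False then show ?thesis using c' by (auto simp: Cs_def PiE_def extensional_def)
        qed
      qed
      show "dec (comb r m c c') = (c, c')" unfolding dec_def 1 using 2 by simp
    qed
    show "\<forall>a'\<in>Cs r (k * m). (\<lambda>(c, c'). comb r m c c') (dec a') = a'"
    proof
      fix c'' assume c'': "c'' \<in> Cs r (k * m)"
      show "(\<lambda>(c, c'). comb r m c c') (dec c'') = c''"
      proof
        fix p
        show "(\<lambda>(c, c'). comb r m c c') (dec c'') p = c'' p"
        proof (cases "p < r")
          case True
          have "rk r (d1 c'') p < r" using rk_bound[OF True] .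
          then show ?thesis using True by (simp add: dec_def comb_def sg_rk d1_def)
        next
          case False then show ?thesis using c'' by (auto simp: dec_def comb_def Cs_def PiE_def extensional_def)
        qed
      qed
    qed
    show "(\<lambda>(c, c'). comb r m c c') ` (Cs r m \<times> Cs r k) \<subseteq> Cs r (k * m)"
    proof clarify
      fix c c' assume c: "c \<in> Cs r m" and c': "c' \<in> Cs r k"
      have "comb r m c c' p < k * m" if p: "p < r" for p
      proof -
        have "c' (rk r c p) < k" using c' rk_bound[OF p] by (auto simp: Cs_def)
        moreover have "c p < m" using c p by (auto simp: Cs_def)
        ultimately have "c' (rk r c p) * m + c p < (c' (rk r c p) + 1) * m" by simp
        also have "\<dots> \<le> k * m" using \<open>c' (rk r c p) < k\<close> by (intro mult_le_mono1) simp
        finally show ?thesis using p by (simp add: comb_def)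
      qed
      then show "comb r m c c' \<in> Cs r (k * m)"
        by (intro Cs_I) (auto simp: comb_def)
    qed
    show "dec ` Cs r (k * m) \<subseteq> Cs r m \<times> Cs r k"
    proof clarify
      fix c'' a b assume c'': "c'' \<in> Cs r (k * m)" and ab: "(a, b) = dec c''"
      have "a \<in> Cs r m" using ab m by (intro Cs_I) (auto simp: dec_def d1_def)
      moreover have "b \<in> Cs r k"
      proof -
        have "c'' (sg r (d1 c'') q) div m < k" if q: "q < r" for q
        proof -
          have "sg r (d1 c'') q < r" using permutes_lt[OF sg_permutes q] .
          then have "c'' (sg r (d1 c'') q) < k * m" using c'' by (auto simp: Cs_def)
          then show ?thesis by (simp add: less_mult_imp_div_less)
        qed
        then show ?thesis using ab by (intro Cs_I) (auto simp: dec_def)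
      qed
      ultimately show "a \<in> Cs r m \<and> b \<in> Cs r k" by simp
    qed
  qed
qed

lemma KSh_mult:
  assumes m: "m \<ge> 1" and w: "w \<in> inj_words n r"
  shows "(\<Sum>u\<in>inj_words n r. KSh r m w u * KSh r k u v) = KSh r (k * m) w v"
proof -
  have lw: "length w = r" using w by (simp add: inj_words_def)
  let ?s = "\<lambda>c. of_int (sign (sg r c)) :: complex"
  have "(\<Sum>u\<in>inj_words n r. KSh r m w u * KSh r k u v)
      = (\<Sum>u\<in>inj_words n r. \<Sum>c\<in>Cs r m. ?s c * ((if perm_word (sg r c) w = u then 1 else 0) * KSh r k u v))"
    unfolding KSh_def[of r m] by (simp add: sum_distrib_right mult.assoc)
  also have "\<dots> = (\<Sum>c\<in>Cs r m. ?s c * (\<Sum>u\<in>inj_words n r. (if perm_word (sg r c) w = u then 1 else 0) * KSh r k u v))"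
    by (subst sum.swap) (simp add: sum_distrib_left)
  also have "\<dots> = (\<Sum>c\<in>Cs r m. ?s c * KSh r k (perm_word (sg r c) w) v)"
    by (intro sum.cong refl arg_cong2[where f = "(*)"] collapse finite_inj_words perm_word_in[OF w sg_permutes])
  also have "\<dots> = (\<Sum>c\<in>Cs r m. \<Sum>c'\<in>Cs r k. of_int (sign (sg r c \<circ> sg r c')) *
                     (if perm_word (sg r c \<circ> sg r c') w = v then 1 else 0))"
  proof (rule sum.cong[OF refl])
    fix c assume c: "c \<in> Cs r m"
    show "?s c * KSh r k (perm_word (sg r c) w) v = (\<Sum>c'\<in>Cs r k. of_int (sign (sg r c \<circ> sg r c')) *
                     (if perm_word (sg r c \<circ> sg r c') w = v then 1 else 0))"
      unfolding KSh_def sum_distrib_left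
    proof (rule sum.cong[OF refl])
      fix c' assume c': "c' \<in> Cs r k"
      have "sign (sg r c \<circ> sg r c') = sign (sg r c) * sign (sg r c')"
        by (rule sign_compose) (auto intro: permutes_imp_permutation sg_permutes)
      then show "?s c * (of_int (sign (sg r c')) * (if perm_word (sg r c') (perm_word (sg r c) w) = v then 1 else 0)) =
            of_int (sign (sg r c \<circ> sg r c')) * (if perm_word (sg r c \<circ> sg r c') w = v then 1 else 0)"
        using perm_word_comp[OF lw sg_permutes, of c' "sg r c"] by simp
    qed
  qed
  also have "\<dots> = (\<Sum>x\<in>Cs r m \<times> Cs r k. of_int (sign (sg r (comb r m (fst x) (snd x)))) *
                     (if perm_word (sg r (comb r m (fst x) (snd x))) w = v then 1 else 0))"
    by (subst sum.cartesian_product) (auto intro!: sum.cong simp: sg_comb)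
  also have "\<dots> = (\<Sum>c''\<in>Cs r (k * m). ?s c'' * (if perm_word (sg r c'') w = v then 1 else 0))"
  proof -
    have "(\<Sum>c''\<in>Cs r (k * m). ?s c'' * (if perm_word (sg r c'') w = v then 1 else 0))
        = (\<Sum>x\<in>Cs r m \<times> Cs r k. (\<lambda>c''. ?s c'' * (if perm_word (sg r c'') w = v then 1 else 0)) ((\<lambda>(c, c'). comb r m c c') x))"
      by (rule sum.reindex_bij_betw[OF comb_bij[OF m], symmetric])
    then show ?thesis by (simp add: case_prod_beta)
  qed
  also have "\<dots> = KSh r (k * m) w v" by (simp add: KSh_def)
  finally show ?thesis .
qed

lemma Sh_mult:
  assumes m: "m \<ge> 1"
  shows "lin (inj_words n r) (KSh r k) (lin (inj_words n r) (KSh r m) f) = lin (inj_words n r) (KSh r (k * m)) f"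
  unfolding lin_comp[OF finite_inj_words finite_inj_words]
  by (rule lin_cong) (rule KSh_mult[OF m])


definition skip :: "nat \<Rightarrow> nat \<Rightarrow> nat" where
  "skip j p = (if p < j then p else Suc p)"

definition dropc :: "nat \<Rightarrow> nat \<Rightarrow> (nat \<Rightarrow> nat) \<Rightarrow> nat \<Rightarrow> nat" where
  "dropc r j c = (\<lambda>p. if p < r - 1 then c (skip j p) else undefined)"

definition insc :: "nat \<Rightarrow> nat \<Rightarrow> nat \<Rightarrow> (nat \<Rightarrow> nat) \<Rightarrow> nat \<Rightarrow> nat" where
  "insc r j b c' = (\<lambda>p. if p < r then (if p = j then b else c' (if p < j then p else p - 1)) else undefined)"

lemma skip_less_iff: "skip j x < skip j y \<longleftrightarrow> x < y"
  by (auto simp: skip_def)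

lemma skip_neq: "skip j x \<noteq> j"
  by (auto simp: skip_def)

lemma skip_neq': "j \<noteq> skip j x"
  by (auto simp: skip_def)

lemma skip_bound: "j < r \<Longrightarrow> p < r - 1 \<Longrightarrow> skip j p < r"
  by (auto simp: skip_def)

lemma skip_inj: "inj (skip j)"
  by (auto simp: inj_def skip_def split: if_splits)

lemma skip_surj: "q \<noteq> j \<Longrightarrow> q = skip j (if q < j then q else q - 1)"
  by (auto simp: skip_def)

lemma del_at_length: "i < length xs \<Longrightarrow> length (del_at i xs) = length xs - 1"
  by (simp add: del_at_def)

lemma del_at_nth: "i < length xs \<Longrightarrow> t < length xs - 1 \<Longrightarrow> del_at i xs ! t = xs ! skip i t"
  by (auto simp: del_at_def nth_append skip_def min_def)

lemma del_at_in:
  assumes w: "w \<in> inj_words n r" and j: "j < r"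
  shows "del_at j w \<in> inj_words n (r - 1)"
proof -
  have "distinct w" "set w \<subseteq> {1..n}" "length w = r" using w by (auto simp: inj_words_def)
  moreover have "distinct (take j w @ drop (Suc j) w)"
  proof -
    have "w = take j w @ (w ! j) # drop (Suc j) w" using j \<open>length w = r\<close> by (simp add: id_take_nth_drop)
    then have "distinct (take j w @ (w ! j) # drop (Suc j) w)" using \<open>distinct w\<close> by metis
    then show ?thesis by auto
  qed
  moreover have "set (take j w @ drop (Suc j) w) \<subseteq> set w"
    by (auto dest: in_set_takeD in_set_dropD)
  ultimately show ?thesis using j by (auto simp: inj_words_def del_at_def)
qed

lemma rk_drop:
  assumes j: "j < r" and p': "p' < r - 1"
  shows "rk r c (skip j p') = skip (rk r c j) (rk (r - 1) (dropc r j c) p')"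
proof -
  let ?c' = "dropc r j c"
  let ?p = "skip j p'"
  have pr: "?p < r" using skip_bound[OF j p'] .
  have pj: "?p \<noteq> j" by (rule skip_neq)
  let ?S' = "{q'. q' < r - 1 \<and> ltc ?c' q' p'}"
  have ltc_eq: "ltc c (skip j q') ?p \<longleftrightarrow> ltc ?c' q' p'" if "q' < r - 1" for q'
    using that p' skip_less_iff[of j q' p'] unfolding ltc_def dropc_def by auto
  have S: "{q. q < r \<and> q \<noteq> j \<and> ltc c q ?p} = skip j ` ?S'"
  proof
    show "{q. q < r \<and> q \<noteq> j \<and> ltc c q ?p} \<subseteq> skip j ` ?S'"
    proof clarify
      fix q assume q: "q < r" "q \<noteq> j" "ltc c q ?p"
      let ?q' = "if q < j then q else q - 1"
      have e: "q = skip j ?q'" using skip_surj[OF q(2)] .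
      have "?q' < r - 1" using q j by auto
      moreover have "ltc ?c' ?q' p'" using ltc_eq[OF calculation] q(3) e by simp
      ultimately show "q \<in> skip j ` ?S'" using e by blast
    qed
    show "skip j ` ?S' \<subseteq> {q. q < r \<and> q \<noteq> j \<and> ltc c q ?p}"
      using ltc_eq skip_bound[OF j] skip_neq by auto
  qed
  have cS: "card {q. q < r \<and> q \<noteq> j \<and> ltc c q ?p} = rk (r - 1) ?c' p'"
    unfolding S using p' by (simp add: card_image inj_on_subset[OF skip_inj] rk_def)
  have rkp: "rk r c ?p = rk (r - 1) ?c' p' + (if ltc c j ?p then 1 else 0)"
  proof (cases "ltc c j ?p")
    case True
    then have "{q. q < r \<and> ltc c q ?p} = insert j {q. q < r \<and> q \<noteq> j \<and> ltc c q ?p}" using j by auto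
    then have "card {q. q < r \<and> ltc c q ?p} = Suc (card {q. q < r \<and> q \<noteq> j \<and> ltc c q ?p})"
      by simp
    then show ?thesis using True pr cS by (simp add: rk_def)
  next
    case False
    then have "{q. q < r \<and> ltc c q ?p} = {q. q < r \<and> q \<noteq> j \<and> ltc c q ?p}" by auto
    then show ?thesis using False pr cS by (simp add: rk_def)
  qed
  have iff: "ltc c j ?p \<longleftrightarrow> rk r c j < rk r c ?p" using rk_lt_iff[OF pr j] by simp
  have ne: "rk r c j \<noteq> rk r c ?p"
  proof
    assume "rk r c j = rk r c ?p"
    then have "j = ?p" using inj_onD[OF rk_inj[of r c]] j pr by simp
    then show False using pj by simp
  qed
  show ?thesis
  proof (cases "ltc c j ?p")
    case True
    then show ?thesis using rkp iff by (simp add: skip_def)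
  next
    case False
    then show ?thesis using rkp iff ne by (simp add: skip_def)
  qed
qed

lemma sg_drop:
  assumes i: "i < r" and t: "t < r - 1"
  shows "sg r c (skip i t) = skip (sg r c i) (sg (r - 1) (dropc r (sg r c i) c) t)"
proof -
  let ?j = "sg r c i"
  let ?c' = "dropc r ?j c"
  have j: "?j < r" using permutes_lt[OF sg_permutes i] .
  have p': "sg (r - 1) ?c' t < r - 1" using permutes_lt[OF sg_permutes t] .
  have "rk r c (skip ?j (sg (r - 1) ?c' t)) = skip (rk r c ?j) (rk (r - 1) ?c' (sg (r - 1) ?c' t))"
    by (rule rk_drop[OF j p'])
  also have "\<dots> = skip i t" by (simp add: rk_sg)
  finally have "sg r c (rk r c (skip ?j (sg (r - 1) ?c' t))) = sg r c (skip i t)" by simp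
  then show ?thesis by (simp add: sg_rk)
qed

lemma word_drop:
  assumes lw: "length w = r" and i: "i < r"
  shows "del_at i (perm_word (sg r c) w) = perm_word (sg (r - 1) (dropc r (sg r c i) c)) (del_at (sg r c i) w)"
proof -
  let ?j = "sg r c i"
  let ?c' = "dropc r ?j c"
  have j: "?j < r" using permutes_lt[OF sg_permutes i] .
  show ?thesis
  proof (rule nth_equalityI)
    show "length (del_at i (perm_word (sg r c) w)) = length (perm_word (sg (r - 1) ?c') (del_at ?j w))"
      using lw i j by (simp add: del_at_length)
    fix t assume "t < length (del_at i (perm_word (sg r c) w))"
    then have t: "t < r - 1" using lw i by (simp add: del_at_length)
    have p': "sg (r - 1) ?c' t < r - 1" using permutes_lt[OF sg_permutes t] .
    have "del_at i (perm_word (sg r c) w) ! t = w ! sg r c (skip i t)"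
      using lw i t skip_bound[OF i t] by (simp add: del_at_nth perm_word_nth)
    also have "\<dots> = w ! skip ?j (sg (r - 1) ?c' t)" using sg_drop[OF i t] by simp
    also have "\<dots> = perm_word (sg (r - 1) ?c') (del_at ?j w) ! t"
      using lw j t p' by (simp add: del_at_nth perm_word_nth del_at_length)
    finally show "del_at i (perm_word (sg r c) w) ! t = perm_word (sg (r - 1) ?c') (del_at ?j w) ! t" .
  qed
qed

definition NI :: "nat \<Rightarrow> (nat \<Rightarrow> nat) \<Rightarrow> (nat \<times> nat) set" where
  "NI r c = {(x, y). x < y \<and> y < r \<and> c y < c x}"

lemma finite_NI: "finite (NI r c)"
proof -
  have "NI r c \<subseteq> {..<r} \<times> {..<r}" by (auto simp: NI_def)
  thus ?thesis by (rule finite_subset) auto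
qed

lemma sign_sg: "sign (sg r c) = (-1) ^ card (NI r c)"
proof -
  have "sign (sg r c) = sign (rk r c)"
    unfolding sg_def by (rule sign_inverse) (rule permutes_imp_permutation[OF _ rk_permutes], simp)
  also have "\<dots> = (-1) ^ card (Inv r (rk r c))" by (rule sign_Inv[OF rk_permutes])
  also have "Inv r (rk r c) = NI r c"
  proof -
    have "x < y \<Longrightarrow> y < r \<Longrightarrow> rk r c y < rk r c x \<longleftrightarrow> c y < c x" for x y
      using rk_lt_iff[of x r y c] by (auto simp: ltc_def)
    then show ?thesis unfolding Inv_def NI_def by auto
  qed
  finally show ?thesis .
qed

lemma card_NI_drop:
  assumes j: "j < r"
  shows "card (NI r c) = card (NI (r - 1) (dropc r j c)) + card {x. x < j \<and> c j < c x}
            + card {y. j < y \<and> y < r \<and> c y < c j}"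
proof -
  let ?c' = "dropc r j c"
  let ?f = "\<lambda>(x, y). (skip j x, skip j y)"
  let ?A = "?f ` NI (r - 1) ?c'"
  let ?B = "(\<lambda>x. (x, j)) ` {x. x < j \<and> c j < c x}"
  let ?C = "(\<lambda>y. (j, y)) ` {y. j < y \<and> y < r \<and> c y < c j}"
  have eq: "NI r c = ?A \<union> ?B \<union> ?C"
  proof
    show "NI r c \<subseteq> ?A \<union> ?B \<union> ?C"
    proof clarify
      fix x y assume xy: "(x, y) \<in> NI r c" and nB: "(x, y) \<notin> ?B" and nC: "(x, y) \<notin> ?C"
      have h: "x < y" "y < r" "c y < c x" using xy by (auto simp: NI_def)
      have "y \<noteq> j" using nB h by auto
      moreover have "x \<noteq> j" using nC h by auto
      ultimately have ex: "x = skip j (if x < j then x else x - 1)" and ey: "y = skip j (if y < j then y else y - 1)"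
        using skip_surj by auto
      let ?x' = "if x < j then x else x - 1" and ?y' = "if y < j then y else y - 1"
      have "skip j ?x' < skip j ?y'" using h ex ey by simp
      then have "?x' < ?y'" unfolding skip_less_iff .
      moreover have "?y' < r - 1" using h j \<open>y \<noteq> j\<close> by auto
      moreover have "?c' ?y' < ?c' ?x'" using h ex ey calculation by (simp add: dropc_def)
      ultimately have "(?x', ?y') \<in> NI (r - 1) ?c'" by (simp add: NI_def)
      then have "?f (?x', ?y') \<in> ?A" by (rule imageI)
      then show "(x, y) \<in> ?A" using ex ey by simp
    qed
    show "?A \<union> ?B \<union> ?C \<subseteq> NI r c"
    proof
      fix z assume "z \<in> ?A \<union> ?B \<union> ?C"
      then consider "z \<in> ?A" | "z \<in> ?B" | "z \<in> ?C" by blast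
      then show "z \<in> NI r c"
      proof cases
        case 1
        then obtain x' y' where "(x', y') \<in> NI (r - 1) ?c'" "z = (skip j x', skip j y')" by auto
        then show ?thesis using skip_less_iff skip_bound[OF j] by (auto simp: NI_def dropc_def)
      next
        case 2 then show ?thesis using j by (auto simp: NI_def)
      next
        case 3 then show ?thesis by (auto simp: NI_def)
      qed
    qed
  qed
  have fA: "finite ?A" using finite_NI by simp
  have fB: "finite ?B" by simp
  have fC: "finite ?C"
    by (rule finite_imageI, rule finite_subset[of _ "{..<r}"]) auto
  have dAB: "?A \<inter> ?B = {}" using skip_neq skip_neq' by auto
  have dABC: "(?A \<union> ?B) \<inter> ?C = {}" using skip_neq skip_neq' by auto
  have "card (NI r c) = card ?A + card ?B + card ?C"
    unfolding eq using fA fB fC dAB dABC by (simp add: card_Un_disjoint)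
  moreover have "card ?A = card (NI (r - 1) ?c')"
    by (rule card_image) (auto simp: inj_on_def skip_inj[THEN injD])
  moreover have "card ?B = card {x. x < j \<and> c j < c x}" by (rule card_image) (auto simp: inj_on_def)
  moreover have "card ?C = card {y. j < y \<and> y < r \<and> c y < c j}" by (rule card_image) (auto simp: inj_on_def)
  ultimately show ?thesis by simp
qed

lemma card_sum_ind: "card {q. q < (r::nat) \<and> P q} = (\<Sum>q<r. if P q then 1 else 0 :: nat)"
proof -
  have "card {q. q < r \<and> P q} = card {q \<in> {..<r}. P q}" by (rule arg_cong[where f = card]) auto
  also have "\<dots> = (\<Sum>q\<in>{q \<in> {..<r}. P q}. 1)" by simp
  also have "\<dots> = (\<Sum>q<r. if P q then 1 else 0)" by (rule sum.inter_filter) simp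
  finally show ?thesis .
qed

lemma neg_one_even: "even (a + b) \<Longrightarrow> ((-1) :: complex) ^ a = (-1) ^ b"
  by (auto simp: minus_one_power_iff)

lemma parity_aux:
  assumes j: "j < r"
  shows "even (card {q. q < r \<and> ltc c q j} + j + card {x. x < j \<and> c j < c x}
           + card {y. j < y \<and> y < r \<and> c y < c j})"
proof -
  have j_sum: "j = (\<Sum>q<r. if q < j then 1 else 0)"
  proof -
    have "{q. q < r \<and> q < j} = {..<j}" using j by auto
    then show ?thesis using card_sum_ind[of r "\<lambda>q. q < j"] by simp
  qed
  have A_sum: "card {x. x < j \<and> c j < c x} = (\<Sum>q<r. if q < j \<and> c j < c q then 1 else 0)"
  proof -
    have "{x. x < j \<and> c j < c x} = {q. q < r \<and> (q < j \<and> c j < c q)}" using j by auto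
    then show ?thesis using card_sum_ind[of r "\<lambda>q. q < j \<and> c j < c q"] by simp
  qed
  have B_sum: "card {y. j < y \<and> y < r \<and> c y < c j} = (\<Sum>q<r. if j < q \<and> c q < c j then 1 else 0)"
  proof -
    have "{y. j < y \<and> y < r \<and> c y < c j} = {q. q < r \<and> (j < q \<and> c q < c j)}" by auto
    then show ?thesis using card_sum_ind[of r "\<lambda>q. j < q \<and> c q < c j"] by simp
  qed
  have "card {q. q < r \<and> ltc c q j} + j + card {x. x < j \<and> c j < c x}
           + card {y. j < y \<and> y < r \<and> c y < c j} =
        (\<Sum>q<r. (if ltc c q j then 1 else 0) + (if q < j then 1 else 0)
        + (if q < j \<and> c j < c q then 1 else 0) + (if j < q \<and> c q < c j then 1 else 0))"
    by (subst j_sum, subst A_sum, subst B_sum, subst card_sum_ind) (simp add: sum.distrib)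
  moreover have "even (\<Sum>q<r. (if ltc c q j then 1 else 0) + (if q < j then 1 else 0)
        + (if q < j \<and> c j < c q then 1 else 0) + (if j < q \<and> c q < c j then 1 else (0::nat)))"
  proof (rule dvd_sum)
    fix q
    show "even ((if ltc c q j then 1 else 0) + (if q < j then 1 else 0)
        + (if q < j \<and> c j < c q then 1 else 0) + (if j < q \<and> c q < c j then 1 else (0::nat)))"
    proof (cases q j rule: linorder_cases)
      case less
      then show ?thesis unfolding ltc_def by (cases "c j < c q") auto
    next
      case equal
      then show ?thesis unfolding ltc_def by simp
    next
      case greater
      then show ?thesis unfolding ltc_def by (cases "c q < c j") auto
    qed
  qed
  ultimately show ?thesis by simp
qed

lemma sign_drop:
  assumes i: "i < r"
  shows "of_int (sign (sg r c)) * (-1) ^ i =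
    (of_int (sign (sg (r - 1) (dropc r (sg r c i) c))) * (-1) ^ (sg r c i) :: complex)"
proof -
  define j where "j = sg r c i"
  define c' where "c' = dropc r j c"
  have j: "j < r" unfolding j_def using permutes_lt[OF sg_permutes i] .
  have ij: "rk r c j = i" unfolding j_def by (simp add: rk_sg)
  have rkj: "rk r c j = card {q. q < r \<and> ltc c q j}" using j by (simp add: rk_def)
  have ev: "even (i + j + card {x. x < j \<and> c j < c x} + card {y. j < y \<and> y < r \<and> c y < c j})"
    using parity_aux[OF j, of c] unfolding rkj[symmetric] ij .
  have N: "card (NI r c) = card (NI (r - 1) c') + card {x. x < j \<and> c j < c x}
            + card {y. j < y \<and> y < r \<and> c y < c j}"
    unfolding c'_def by (rule card_NI_drop[OF j])
  have eq: "(card (NI r c) + i) + (card (NI (r - 1) c') + j) =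
     (i + j + card {x. x < j \<and> c j < c x} + card {y. j < y \<and> y < r \<and> c y < c j}) + 2 * card (NI (r - 1) c')"
    unfolding N by simp
  have "even ((card (NI r c) + i) + (card (NI (r - 1) c') + j))"
    unfolding eq using ev by simp
  then have "((-1)::complex) ^ (card (NI r c) + i) = (-1) ^ (card (NI (r - 1) c') + j)"
    by (rule neg_one_even)
  then show ?thesis unfolding sign_sg j_def[symmetric] c'_def[symmetric] by (simp add: power_add)
qed


lemma drop_bij:
  assumes r: "r \<ge> 1"
  shows "bij_betw (\<lambda>(c, i). (c (sg r c i), (dropc r (sg r c i) c, sg r c i)))
           (Cs r m \<times> {..<r}) ({..<m} \<times> (Cs (r - 1) m \<times> {..<r}))"
proof (rule bij_betw_byWitness[where f' = "\<lambda>(b, c', j). (insc r j b c', rk r (insc r j b c') j)"])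
  show "\<forall>a\<in>Cs r m \<times> {..<r}. (\<lambda>(b, c', j). (insc r j b c', rk r (insc r j b c') j))
          ((\<lambda>(c, i). (c (sg r c i), (dropc r (sg r c i) c, sg r c i))) a) = a"
  proof
    fix x assume x: "x \<in> Cs r m \<times> {..<r}"
    obtain c i where ci: "x = (c, i)" by fastforce
    have c: "c \<in> Cs r m" and i: "i < r" using x ci by auto
    let ?j = "sg r c i"
    have j: "?j < r" using permutes_lt[OF sg_permutes i] .
    have e: "insc r ?j (c ?j) (dropc r ?j c) = c"
    proof
      fix p show "insc r ?j (c ?j) (dropc r ?j c) p = c p"
      proof (cases "p < r")
        case True
        then show ?thesis using j by (auto simp: insc_def dropc_def skip_def)
      next
        case False then show ?thesis using Cs_D2[OF c] by (simp add: insc_def)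
      qed
    qed
    have "(insc r ?j (c ?j) (dropc r ?j c), rk r (insc r ?j (c ?j) (dropc r ?j c)) ?j) = (c, i)"
    proof -
      have rj: "rk r c ?j = i" by (rule rk_sg)
      show ?thesis by (simp only: e rj)
    qed
    then show "(\<lambda>(b, c', j). (insc r j b c', rk r (insc r j b c') j))
          ((\<lambda>(c, i). (c (sg r c i), (dropc r (sg r c i) c, sg r c i))) x) = x"
      unfolding ci by (simp only: prod.case)
  qed
  show "\<forall>a'\<in>{..<m} \<times> (Cs (r - 1) m \<times> {..<r}). (\<lambda>(c, i). (c (sg r c i), (dropc r (sg r c i) c, sg r c i)))
          ((\<lambda>(b, c', j). (insc r j b c', rk r (insc r j b c') j)) a') = a'"
  proof
    fix y assume y: "y \<in> {..<m} \<times> (Cs (r - 1) m \<times> {..<r})"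
    obtain b c' j where y': "y = (b, c', j)" by (cases y) auto
    have b: "b < m" and c': "c' \<in> Cs (r - 1) m" and j: "j < r" using y y' by auto
    let ?c = "insc r j b c'"
    have sj: "sg r ?c (rk r ?c j) = j" by (rule sg_rk)
    have cj: "?c j = b" using j by (simp add: insc_def)
    have dc: "dropc r j ?c = c'"
    proof
      fix p show "dropc r j ?c p = c' p"
      proof (cases "p < r - 1")
        case True
        then show ?thesis using j by (auto simp: insc_def dropc_def skip_def)
      next
        case False then show ?thesis using Cs_D2[OF c'] by (simp add: dropc_def)
      qed
    qed
    show "(\<lambda>(c, i). (c (sg r c i), (dropc r (sg r c i) c, sg r c i)))
          ((\<lambda>(b, c', j). (insc r j b c', rk r (insc r j b c') j)) y) = y"
      unfolding y' using sj cj dc by simp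
  qed
  show "(\<lambda>(c, i). (c (sg r c i), (dropc r (sg r c i) c, sg r c i))) ` (Cs r m \<times> {..<r})
         \<subseteq> {..<m} \<times> (Cs (r - 1) m \<times> {..<r})"
  proof (rule image_subsetI)
    fix x assume x: "x \<in> Cs r m \<times> {..<r}"
    obtain c i where ci: "x = (c, i)" by fastforce
    have c: "c \<in> Cs r m" and i: "i < r" using x ci by auto
    let ?j = "sg r c i"
    have j: "?j < r" using permutes_lt[OF sg_permutes i] .
    have "c ?j < m" using Cs_D[OF c j] .
    moreover have "dropc r ?j c \<in> Cs (r - 1) m"
    proof (rule Cs_I)
      fix p assume p: "p < r - 1"
      show "dropc r ?j c p < m" using Cs_D[OF c skip_bound[OF j p]] p by (simp add: dropc_def)
    qed (simp add: dropc_def)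
    ultimately show "(\<lambda>(c, i). (c (sg r c i), (dropc r (sg r c i) c, sg r c i))) x
        \<in> {..<m} \<times> (Cs (r - 1) m \<times> {..<r})" using j ci by simp
  qed
  show "(\<lambda>(b, c', j). (insc r j b c', rk r (insc r j b c') j)) ` ({..<m} \<times> (Cs (r - 1) m \<times> {..<r}))
         \<subseteq> Cs r m \<times> {..<r}"
  proof (rule image_subsetI)
    fix y assume y: "y \<in> {..<m} \<times> (Cs (r - 1) m \<times> {..<r})"
    obtain b c' j where y': "y = (b, c', j)" by (cases y) auto
    have b: "b < m" and c': "c' \<in> Cs (r - 1) m" and j: "j < r" using y y' by auto
    have "insc r j b c' \<in> Cs r m"
    proof (rule Cs_I)
      fix p assume p: "p < r"
      show "insc r j b c' p < m"
      proof (cases "p = j")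
        case True then show ?thesis using b p by (simp add: insc_def)
      next
        case False
        then have "(if p < j then p else p - 1) < r - 1" using p j by auto
        then show ?thesis using False p Cs_D[OF c'] by (simp add: insc_def)
      qed
    qed (simp add: insc_def)
    moreover have "rk r (insc r j b c') j < r" using rk_bound[OF j] .
    ultimately show "(\<lambda>(b, c', j). (insc r j b c', rk r (insc r j b c') j)) y \<in> Cs r m \<times> {..<r}"
      using y' by simp
  qed
qed

lemma bd_sum_identity:
  assumes r: "r \<ge> 1" and lw: "length w = r"
  shows "(\<Sum>c\<in>Cs r m. \<Sum>i<r. of_int (sign (sg r c)) * (-1) ^ i * G (del_at i (perm_word (sg r c) w))) =
         of_nat m * (\<Sum>c'\<in>Cs (r - 1) m. \<Sum>j<r. of_int (sign (sg (r - 1) c')) * (-1) ^ j *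
                         G (perm_word (sg (r - 1) c') (del_at j w)) :: complex)"
proof -
  define F2 where "F2 = (\<lambda>(c' :: nat \<Rightarrow> nat, j :: nat). of_int (sign (sg (r - 1) c')) * (-1) ^ j *
                         G (perm_word (sg (r - 1) c') (del_at j w)) :: complex)"
  define phi where "phi = (\<lambda>(c, i). (c (sg r c i), (dropc r (sg r c i) c, sg r c i)))"
  have "(\<Sum>c\<in>Cs r m. \<Sum>i<r. of_int (sign (sg r c)) * (-1) ^ i * G (del_at i (perm_word (sg r c) w)))
      = (\<Sum>x\<in>Cs r m \<times> {..<r}. of_int (sign (sg r (fst x))) * (-1) ^ (snd x) * G (del_at (snd x) (perm_word (sg r (fst x)) w)))"
    by (subst sum.cartesian_product) (simp add: case_prod_beta)
  also have "\<dots> = (\<Sum>x\<in>Cs r m \<times> {..<r}. (F2 \<circ> snd) (phi x))"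
  proof (rule sum.cong[OF refl])
    fix x assume x: "x \<in> Cs r m \<times> {..<r}"
    obtain c i where ci: "x = (c, i)" by fastforce
    have i: "i < r" using x ci by simp
    show "of_int (sign (sg r (fst x))) * (-1) ^ (snd x) * G (del_at (snd x) (perm_word (sg r (fst x)) w)) = (F2 \<circ> snd) (phi x)"
      unfolding ci phi_def F2_def using sign_drop[OF i, of c] word_drop[OF lw i, of c] by simp
  qed
  also have "\<dots> = (\<Sum>y\<in>{..<m} \<times> (Cs (r - 1) m \<times> {..<r}). (F2 \<circ> snd) y)"
    unfolding phi_def by (rule sum.reindex_bij_betw[OF drop_bij[OF r]])
  also have "\<dots> = (\<Sum>b<m. \<Sum>y\<in>Cs (r - 1) m \<times> {..<r}. F2 y)"
    unfolding sum.cartesian_product by (simp add: comp_def case_prod_beta)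
  also have "\<dots> = of_nat m * (\<Sum>y\<in>Cs (r - 1) m \<times> {..<r}. F2 y)" by simp
  also have "(\<Sum>y\<in>Cs (r - 1) m \<times> {..<r}. F2 y) = (\<Sum>c'\<in>Cs (r - 1) m. \<Sum>j<r. of_int (sign (sg (r - 1) c')) * (-1) ^ j *
                         G (perm_word (sg (r - 1) c') (del_at j w)))"
    unfolding F2_def by (subst sum.cartesian_product) (simp add: case_prod_beta)
  finally show ?thesis .
qed

definition Kbd :: "nat \<Rightarrow> nat list \<Rightarrow> nat list \<Rightarrow> complex" where
  "Kbd r u v = (\<Sum>j<r. if del_at j u = v then (-1) ^ j else 0)"

lemma bd_lin: "bd n r f = lin (inj_words n r) (Kbd r) f"
  unfolding bd_def lin_def Kbd_def by simp

lemma KSh_bd: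
  assumes r: "r \<ge> 1" and w: "w \<in> inj_words n r"
  shows "(\<Sum>u\<in>inj_words n r. KSh r m w u * Kbd r u v) =
         of_nat m * (\<Sum>u\<in>inj_words n (r - 1). Kbd r w u * KSh (r - 1) m u v)"
proof -
  have lw: "length w = r" using w by (simp add: inj_words_def)
  let ?G = "\<lambda>x. if x = v then 1 else (0::complex)"
  let ?s = "\<lambda>c. of_int (sign (sg r c)) :: complex"
  have "(\<Sum>u\<in>inj_words n r. KSh r m w u * Kbd r u v)
      = (\<Sum>u\<in>inj_words n r. \<Sum>c\<in>Cs r m. ?s c * ((if perm_word (sg r c) w = u then 1 else 0) * Kbd r u v))"
    unfolding KSh_def by (simp add: sum_distrib_right mult.assoc)
  also have "\<dots> = (\<Sum>c\<in>Cs r m. ?s c * (\<Sum>u\<in>inj_words n r. (if perm_word (sg r c) w = u then 1 else 0) * Kbd r u v))"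
    by (subst sum.swap) (simp add: sum_distrib_left)
  also have "\<dots> = (\<Sum>c\<in>Cs r m. ?s c * Kbd r (perm_word (sg r c) w) v)"
    by (intro sum.cong refl arg_cong2[where f = "(*)"] collapse finite_inj_words perm_word_in[OF w sg_permutes])
  also have "\<dots> = (\<Sum>c\<in>Cs r m. \<Sum>i<r. ?s c * (-1) ^ i * ?G (del_at i (perm_word (sg r c) w)))"
    unfolding Kbd_def by (simp add: sum_distrib_left if_distrib cong: if_cong)
  also have "\<dots> = of_nat m * (\<Sum>c'\<in>Cs (r - 1) m. \<Sum>j<r. of_int (sign (sg (r - 1) c')) * (-1) ^ j *
                         ?G (perm_word (sg (r - 1) c') (del_at j w)))"
    by (rule bd_sum_identity[OF r lw])
  also have "(\<Sum>c'\<in>Cs (r - 1) m. \<Sum>j<r. of_int (sign (sg (r - 1) c')) * (-1) ^ j *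
                         ?G (perm_word (sg (r - 1) c') (del_at j w)))
      = (\<Sum>j<r. (-1) ^ j * KSh (r - 1) m (del_at j w) v)"
    unfolding KSh_def by (subst sum.swap) (simp add: sum_distrib_left mult_ac)
  also have "\<dots> = (\<Sum>j<r. \<Sum>u\<in>inj_words n (r - 1). (if del_at j w = u then (-1) ^ j else 0) * KSh (r - 1) m u v)"
  proof (rule sum.cong[OF refl])
    fix j assume j: "j \<in> {..<r}"
    have "(\<Sum>u\<in>inj_words n (r - 1). (if del_at j w = u then (-1) ^ j else 0) * KSh (r - 1) m u v)
        = (-1) ^ j * (\<Sum>u\<in>inj_words n (r - 1). (if del_at j w = u then 1 else 0) * KSh (r - 1) m u v)"
      unfolding sum_distrib_left by (rule sum.cong) auto
    also have "\<dots> = (-1) ^ j * KSh (r - 1) m (del_at j w) v"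
      using collapse[OF finite_inj_words del_at_in[OF w], of j] j by simp
    finally show "(-1) ^ j * KSh (r - 1) m (del_at j w) v =
        (\<Sum>u\<in>inj_words n (r - 1). (if del_at j w = u then (-1) ^ j else 0) * KSh (r - 1) m u v)" by simp
  qed
  also have "\<dots> = (\<Sum>u\<in>inj_words n (r - 1). Kbd r w u * KSh (r - 1) m u v)"
    unfolding Kbd_def by (subst sum.swap) (simp add: sum_distrib_right)
  finally show ?thesis .
qed

lemma bd_Sh:
  assumes r: "r \<ge> 1"
  shows "bd n r (lin (inj_words n r) (KSh r m) f) =
         (\<lambda>v. of_nat m * lin (inj_words n (r - 1)) (KSh (r - 1) m) (bd n r f) v)"
proof -
  have "bd n r (lin (inj_words n r) (KSh r m) f) =
        lin (inj_words n r) (\<lambda>w v. \<Sum>u\<in>inj_words n r. KSh r m w u * Kbd r u v) f"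
    unfolding bd_lin by (rule lin_comp[OF finite_inj_words finite_inj_words])
  also have "\<dots> = lin (inj_words n r) (\<lambda>w v. of_nat m * (\<Sum>u\<in>inj_words n (r - 1). Kbd r w u * KSh (r - 1) m u v)) f"
    by (rule lin_cong) (rule KSh_bd[OF r])
  also have "\<dots> = (\<lambda>v. of_nat m * lin (inj_words n r) (\<lambda>w v. \<Sum>u\<in>inj_words n (r - 1). Kbd r w u * KSh (r - 1) m u v) f v)"
    unfolding lin_def by (simp add: sum_distrib_left mult_ac)
  also have "lin (inj_words n r) (\<lambda>w v. \<Sum>u\<in>inj_words n (r - 1). Kbd r w u * KSh (r - 1) m u v) f
      = lin (inj_words n (r - 1)) (KSh (r - 1) m) (bd n r f)"
    unfolding bd_lin by (rule lin_comp[OF finite_inj_words finite_inj_words, symmetric])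
  finally show ?thesis .
qed


lemma descents_lt: "r \<ge> 1 \<Longrightarrow> descents r s < r"
proof -
  assume r: "r \<ge> 1"
  have "{i. Suc i < r \<and> s (Suc i) < s i} \<subseteq> {..<r - 1}" by auto
  then have "descents r s \<le> card {..<r - 1}" unfolding descents_def by (rule card_mono[rotated]) auto
  then show ?thesis using r by simp
qed

definition Pd :: "nat \<Rightarrow> nat \<Rightarrow> complex poly" where
  "Pd r d = smult (1 / fact r) (\<Prod>i<r. [: of_int (int i - int d), 1 :])"

lemma poly_Pd: "poly (Pd r d) x = (\<Prod>i<r. of_int (int i - int d) + x) / fact r"
  unfolding Pd_def by (simp add: poly_prod)

lemma degree_Pd: "degree (Pd r d) \<le> r"
proof -
  have "degree (\<Prod>i<r. [: of_int (int i - int d), 1 :] :: complex poly) \<le> (\<Sum>i<r. degree [: of_int (int i - int d) :: complex, 1 :])"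
    using degree_prod_sum_le[of "{..<r}" "\<lambda>i. [: of_int (int i - int d) :: complex, 1 :]"] by (simp add: o_def)
  also have "\<dots> = r" by simp
  finally show ?thesis unfolding Pd_def by (meson degree_smult_le order.trans)
qed

lemma coeff0_Pd: "d < r \<Longrightarrow> coeff (Pd r d) 0 = 0"
proof -
  assume d: "d < r"
  have "(\<Prod>i<r. of_int (int i - int d) + (0::complex)) = 0"
    using d by (intro prod_zero) (auto intro!: bexI[of _ d])
  then show ?thesis using poly_Pd[of r d 0] by (simp add: poly_0_coeff_0)
qed

lemma poly_Pd_nat:
  assumes k: "k \<ge> 1" and d: "d < r"
  shows "poly (Pd r d) (of_nat k) = (if d < k then of_nat ((r + k - 1 - d) choose r) else 0)"
proof (cases "d < k")
  case True
  have "(\<Prod>i<r. of_int (int i - int d) + (of_nat k :: complex)) = (\<Prod>i<r. of_nat (k - d) + of_nat i)"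
    using True by (intro prod.cong refl) (simp add: of_nat_diff)
  also have "\<dots> = pochhammer (of_nat (k - d)) r" by (simp add: pochhammer_prod atLeast0LessThan)
  finally have 1: "poly (Pd r d) (of_nat k) = pochhammer (of_nat (k - d)) r / fact r"
    by (simp add: poly_Pd)
  have "(of_nat ((r + k - 1 - d) choose r) :: complex) = of_nat (r + k - 1 - d) gchoose r"
    by (rule binomial_gbinomial)
  also have "\<dots> = pochhammer (of_nat (r + k - 1 - d) - of_nat r + 1) r / fact r"
    by (rule gbinomial_pochhammer')
  also have "of_nat (r + k - 1 - d) - of_nat r + 1 = (of_nat (k - d) :: complex)"
    using True by (simp add: of_nat_diff)
  finally show ?thesis using 1 True by simp
next
  case False
  have "(\<Prod>i<r. of_int (int i - int d) + (of_nat k :: complex)) = 0"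
  proof (rule prod_zero)
    show "finite {..<r}" by simp
    show "\<exists>a\<in>{..<r}. of_int (int a - int d) + (of_nat k :: complex) = 0"
      using False d by (intro bexI[of _ "d - k"]) auto
  qed
  then show ?thesis using False by (simp add: poly_Pd)
qed

definition Ee :: "nat \<Rightarrow> nat \<Rightarrow> (nat \<Rightarrow> nat) \<Rightarrow> complex" where
  "Ee r j s = (if s permutes {..<r} \<and> j \<in> {1..r} then of_int (sign s) * coeff (Pd r (descents r s)) j else 0)"

lemma poly_sum_1r:
  fixes p :: "complex poly"
  assumes "degree p \<le> r" "coeff p 0 = 0"
  shows "(\<Sum>j=1..r. x ^ j * coeff p j) = poly p x"
proof -
  have "poly p x = (\<Sum>i\<le>degree p. coeff p i * x ^ i)" by (rule poly_altdef)
  also have "\<dots> = (\<Sum>i\<le>r. coeff p i * x ^ i)"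
    by (rule sum.mono_neutral_left) (use assms in \<open>auto simp: coeff_eq_0\<close>)
  also have "\<dots> = (\<Sum>i\<in>insert 0 {1..r}. coeff p i * x ^ i)"
    by (rule sum.cong) auto
  also have "\<dots> = (\<Sum>j=1..r. x ^ j * coeff p j)" using assms by (simp add: mult.commute)
  finally show ?thesis by simp
qed

lemma Ee_expand:
  assumes k: "k \<ge> 1" and r: "r \<ge> 1"
  shows "(-1) ^ (k - 1) * eul_lambda r k s = (\<Sum>j=1..r. of_nat k ^ j * Ee r j s)"
proof (cases "s permutes {..<r}")
  case True
  let ?d = "descents r s"
  have d: "?d < r" using descents_lt[OF r] .
  have "(\<Sum>j=1..r. of_nat k ^ j * Ee r j s) = of_int (sign s) * (\<Sum>j=1..r. of_nat k ^ j * coeff (Pd r ?d) j)"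
    unfolding Ee_def using True by (simp add: sum_distrib_left mult_ac)
  also have "\<dots> = of_int (sign s) * poly (Pd r ?d) (of_nat k)"
    using poly_sum_1r[OF degree_Pd coeff0_Pd[OF d]] by simp
  also have "\<dots> = (-1) ^ (k - 1) * eul_lambda r k s"
    unfolding Phi_closed[OF k] poly_Pd_nat[OF k d] using True by simp
  finally show ?thesis by simp
next
  case False
  then show ?thesis unfolding Phi_closed[OF k] Ee_def by simp
qed

lemma poly_coeff_zero:
  fixes a :: "nat \<Rightarrow> complex"
  assumes h: "\<And>k. k \<ge> 1 \<Longrightarrow> (\<Sum>j=1..r. of_nat k ^ j * a j) = 0" and j: "j \<in> {1..r}"
  shows "a j = 0"
proof -
  define q where "q = (\<Sum>i=1..r. monom (a i) i)"
  have pq: "poly q (of_nat k) = 0" if "k \<ge> 1" for k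
    using h[OF that] unfolding q_def by (simp add: poly_sum poly_monom mult.commute)
  have "q = 0"
  proof (rule ccontr)
    assume "q \<noteq> 0"
    then have fin: "finite {x. poly q x = 0}" by (rule poly_roots_finite)
    have "of_nat ` {1..} \<subseteq> {x. poly q x = (0::complex)}" using pq by auto
    moreover have "infinite (of_nat ` {1..} :: complex set)"
    proof
      assume "finite (of_nat ` {1..} :: complex set)"
      then have "finite {1::nat..}" by (rule finite_imageD) (simp add: inj_on_def)
      then show False using infinite_Ici by blast
    qed
    ultimately show False using fin finite_subset by blast
  qed
  then have "coeff q j = 0" by simp
  moreover have "coeff q j = a j" unfolding q_def using j by (simp add: coeff_sum coeff_monom)
  ultimately show ?thesis by simp
qed

lemma euler_e_eq:
  assumes r: "r \<ge> 1"
  shows "euler_e r = Ee r"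
  unfolding euler_e_def
proof (rule the_equality)
  show "(\<forall>j. j \<notin> {1..r} \<longrightarrow> Ee r j = (\<lambda>\<sigma>. 0)) \<and>
        (\<forall>k::nat. k \<ge> 1 \<longrightarrow> (\<lambda>\<sigma>. (-1) ^ (k - 1) * eul_lambda r k \<sigma>) = (\<lambda>\<sigma>. \<Sum>j=1..r. of_nat k ^ j * Ee r j \<sigma>))"
    using Ee_expand[OF _ r] by (auto simp: Ee_def)
next
  fix e assume e: "(\<forall>j. j \<notin> {1..r} \<longrightarrow> e j = (\<lambda>\<sigma>. 0)) \<and>
        (\<forall>k::nat. k \<ge> 1 \<longrightarrow> (\<lambda>\<sigma>. (-1) ^ (k - 1) * eul_lambda r k \<sigma>) = (\<lambda>\<sigma>. \<Sum>j=1..r. of_nat k ^ j * e j \<sigma>))"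
  show "e = Ee r"
  proof (intro ext)
    fix j s
    show "e j s = Ee r j s"
    proof (cases "j \<in> {1..r}")
      case False then show ?thesis using e by (auto simp: Ee_def)
    next
      case True
      have "(\<Sum>i=1..r. of_nat k ^ i * (e i s - Ee r i s)) = 0" if k: "k \<ge> 1" for k
      proof -
        have "(\<Sum>i=1..r. of_nat k ^ i * e i s) = (-1) ^ (k - 1) * eul_lambda r k s"
          using e k by metis
        also have "\<dots> = (\<Sum>i=1..r. of_nat k ^ i * Ee r i s)" by (rule Ee_expand[OF k r])
        finally show ?thesis by (simp add: algebra_simps sum_subtractf)
      qed
      then have "e j s - Ee r j s = 0" using poly_coeff_zero[where a = "\<lambda>i. e i s - Ee r i s" and r = r and j = j] True by blast
      then show ?thesis by simp
    qed
  qed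
qed


lemma lin_linear:
  assumes "finite J"
  shows "lin W K (\<lambda>v. \<Sum>j\<in>J. a j * g j v) = (\<lambda>v. \<Sum>j\<in>J. a j * lin W K (g j) v)"
proof
  fix v
  have "lin W K (\<lambda>v. \<Sum>j\<in>J. a j * g j v) v = (\<Sum>w\<in>W. \<Sum>j\<in>J. a j * g j w * K w v)"
    unfolding lin_def by (simp add: sum_distrib_right)
  also have "\<dots> = (\<Sum>j\<in>J. \<Sum>w\<in>W. a j * g j w * K w v)" by (rule sum.swap)
  also have "\<dots> = (\<Sum>j\<in>J. a j * lin W K (g j) v)"
    unfolding lin_def by (simp add: sum_distrib_left mult.assoc)
  finally show "lin W K (\<lambda>v. \<Sum>j\<in>J. a j * g j v) v = (\<Sum>j\<in>J. a j * lin W K (g j) v)" .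
qed

lemma act_linear:
  assumes "finite J"
  shows "act n r e (\<lambda>v. \<Sum>j\<in>J. a j * g j v) = (\<lambda>v. \<Sum>j\<in>J. a j * act n r e (g j) v)"
  unfolding act_lin by (rule lin_linear[OF assms])

lemma act_sum:
  assumes "finite J"
  shows "act n r e (\<lambda>v. \<Sum>j\<in>J. g j v) = (\<lambda>v. \<Sum>j\<in>J. act n r e (g j) v)"
  using act_linear[OF assms, of n r e "\<lambda>_. 1" g] by simp

lemma bd_linear:
  assumes "finite J"
  shows "bd n r (\<lambda>v. \<Sum>j\<in>J. a j * g j v) = (\<lambda>v. \<Sum>j\<in>J. a j * bd n r (g j) v)"
  unfolding bd_lin by (rule lin_linear[OF assms])

lemma act_linear_e:
  assumes "finite J"
  shows "act n r (\<lambda>s. \<Sum>j\<in>J. a j * e j s) f = (\<lambda>v. \<Sum>j\<in>J. a j * act n r (e j) f v)"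
proof
  fix v
  have "act n r (\<lambda>s. \<Sum>j\<in>J. a j * e j s) f v =
      (\<Sum>s\<in>{s. s permutes {..<r}}. \<Sum>j\<in>J. a j * (e j s * (\<Sum>w\<in>inj_words n r. if perm_word s w = v then f w else 0)))"
    unfolding act_def by (simp add: sum_distrib_right mult.assoc)
  also have "\<dots> = (\<Sum>j\<in>J. \<Sum>s\<in>{s. s permutes {..<r}}. a j * (e j s * (\<Sum>w\<in>inj_words n r. if perm_word s w = v then f w else 0)))"
    by (rule sum.swap)
  also have "\<dots> = (\<Sum>j\<in>J. a j * act n r (e j) f v)"
    unfolding act_def by (simp add: sum_distrib_left)
  finally show "act n r (\<lambda>s. \<Sum>j\<in>J. a j * e j s) f v = (\<Sum>j\<in>J. a j * act n r (e j) f v)" .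
qed

lemma act_cong:
  assumes "\<And>w. w \<in> inj_words n r \<Longrightarrow> h w = h' w"
  shows "act n r e h = act n r e h'"
  unfolding act_lin lin_def using assms by (intro ext sum.cong) auto

abbreviation A :: "nat \<Rightarrow> nat \<Rightarrow> nat \<Rightarrow> (nat list \<Rightarrow> complex) \<Rightarrow> (nat list \<Rightarrow> complex)" where
  "A n r j \<equiv> act n r (euler_e r j)"

lemma Phi_act:
  assumes k: "k \<ge> 1" and r: "r \<ge> 1"
  shows "act n r (\<lambda>s. (-1) ^ (k - 1) * eul_lambda r k s) f = (\<lambda>v. \<Sum>j=1..r. of_nat k ^ j * A n r j f v)"
proof -
  have "(\<lambda>s. (-1) ^ (k - 1) * eul_lambda r k s) = (\<lambda>s. \<Sum>j=1..r. of_nat k ^ j * euler_e r j s)"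
    using Ee_expand[OF k r] euler_e_eq[OF r] by simp
  then show ?thesis using act_linear_e[of "{1..r}" n r "\<lambda>j. of_nat k ^ j" "euler_e r" f] by simp
qed

lemma Phi_mult:
  assumes k: "k \<ge> 1" and m: "m \<ge> 1" and r: "r \<ge> 1"
  shows "act n r (\<lambda>s. (-1) ^ (k - 1) * eul_lambda r k s) (act n r (\<lambda>s. (-1) ^ (m - 1) * eul_lambda r m s) f)
       = act n r (\<lambda>s. (-1) ^ (k * m - 1) * eul_lambda r (k * m) s) f"
proof -
  have km: "k * m \<ge> 1" using k m by simp
  show ?thesis unfolding act_Phi_Sh[OF k r] act_Phi_Sh[OF m r] act_Phi_Sh[OF km r]
    by (rule Sh_mult[OF m])
qed

lemma orth:
  assumes r: "r \<ge> 1" and i: "i \<in> {1..r}" and j: "j \<in> {1..r}"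
  shows "A n r i (A n r j f) = (if i = j then A n r j f else (\<lambda>_. 0))"
proof
  fix v
  let ?X = "\<lambda>i j. A n r i (A n r j f) v"
  let ?Y = "\<lambda>i. A n r i f v"
  have main: "(\<Sum>i=1..r. of_nat k ^ i * (\<Sum>j=1..r. of_nat m ^ j * ?X i j)) = (\<Sum>i=1..r. of_nat k ^ i * (of_nat m ^ i * ?Y i))"
    if k: "k \<ge> 1" and m: "m \<ge> 1" for k m
  proof -
    have km: "k * m \<ge> 1" using k m by simp
    have e2: "A n r i (act n r (\<lambda>s. (-1) ^ (m - 1) * eul_lambda r m s) f) v = (\<Sum>j=1..r. of_nat m ^ j * ?X i j)" for i
      unfolding Phi_act[OF m r] act_linear[OF finite_atLeastAtMost] by simp
    have "act n r (\<lambda>s. (-1) ^ (k - 1) * eul_lambda r k s) (act n r (\<lambda>s. (-1) ^ (m - 1) * eul_lambda r m s) f) v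
        = (\<Sum>i=1..r. of_nat k ^ i * A n r i (act n r (\<lambda>s. (-1) ^ (m - 1) * eul_lambda r m s) f) v)"
      by (simp only: Phi_act[OF k r])
    also have "\<dots> = (\<Sum>i=1..r. of_nat k ^ i * (\<Sum>j=1..r. of_nat m ^ j * ?X i j))"
      by (simp only: e2)
    finally have "(\<Sum>i=1..r. of_nat k ^ i * (\<Sum>j=1..r. of_nat m ^ j * ?X i j))
        = act n r (\<lambda>s. (-1) ^ (k - 1) * eul_lambda r k s) (act n r (\<lambda>s. (-1) ^ (m - 1) * eul_lambda r m s) f) v" ..
    also have "\<dots> = act n r (\<lambda>s. (-1) ^ (k * m - 1) * eul_lambda r (k * m) s) f v"
      using Phi_mult[OF k m r] by simp
    also have "\<dots> = (\<Sum>i=1..r. of_nat k ^ i * (of_nat m ^ i * ?Y i))"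
      unfolding Phi_act[OF km r] by (simp add: power_mult_distrib mult.assoc)
    finally show ?thesis .
  qed
  have step1: "(\<Sum>j=1..r. of_nat m ^ j * ?X i j) - of_nat m ^ i * ?Y i = 0" if m: "m \<ge> 1" for m
  proof (rule poly_coeff_zero[where a = "\<lambda>i. (\<Sum>j=1..r. of_nat m ^ j * ?X i j) - of_nat m ^ i * ?Y i" and r = r, OF _ i])
    fix k :: nat assume k: "k \<ge> 1"
    show "(\<Sum>i=1..r. of_nat k ^ i * ((\<Sum>j=1..r. of_nat m ^ j * ?X i j) - of_nat m ^ i * ?Y i)) = 0"
      using main[OF k m] by (simp add: right_diff_distrib sum_subtractf)
  qed
  have "?X i j - (if j = i then ?Y i else 0) = 0"
  proof (rule poly_coeff_zero[where a = "\<lambda>j. ?X i j - (if j = i then ?Y i else 0)" and r = r, OF _ j])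
    fix m :: nat assume m: "m \<ge> 1"
    have "(\<Sum>j=1..r. of_nat m ^ j * (if j = i then ?Y i else 0)) = of_nat m ^ i * ?Y i"
      using i by (simp add: if_distrib cong: if_cong)
    then show "(\<Sum>j=1..r. of_nat m ^ j * (?X i j - (if j = i then ?Y i else 0))) = 0"
      using step1[OF m] by (simp add: right_diff_distrib sum_subtractf)
  qed
  then show "A n r i (A n r j f) v = (if i = j then A n r j f else (\<lambda>_. 0)) v" by auto
qed

lemma KSh_1:
  assumes w: "length w = r"
  shows "KSh r 1 w v = (if w = v then 1 else 0)"
proof -
  define c0 where "c0 = (\<lambda>p. if p < r then 0 else undefined :: nat)"
  have Cs1: "Cs r 1 = {c0}"
  proof
    show "Cs r 1 \<subseteq> {c0}"
    proof
      fix c assume c: "c \<in> Cs r 1"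
      have "c = c0"
      proof
        fix p show "c p = c0 p" using Cs_D[OF c, of p] Cs_D2[OF c, of p] by (auto simp: c0_def)
      qed
      then show "c \<in> {c0}" by simp
    qed
    show "{c0} \<subseteq> Cs r 1" by (auto intro!: Cs_I simp: c0_def)
  qed
  have rk0: "rk r c0 = id"
  proof
    fix p show "rk r c0 p = id p"
    proof (cases "p < r")
      case True
      then have "{q. q < r \<and> ltc c0 q p} = {..<p}" by (auto simp: ltc_def c0_def)
      then show ?thesis using True by (simp add: rk_def)
    qed (simp add: rk_def)
  qed
  have "sg r c0 = id" unfolding sg_def rk0 by (simp add: inv_id)
  then show ?thesis unfolding KSh_def Cs1 by simp
qed

lemma sum_A:
  assumes r: "r \<ge> 1" and f: "f \<in> M n r"
  shows "(\<lambda>v. \<Sum>j=1..r. A n r j f v) = f"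
proof -
  have "(\<lambda>v. \<Sum>j=1..r. A n r j f v) = act n r (\<lambda>s. (-1) ^ (1 - 1) * eul_lambda r 1 s) f"
    unfolding Phi_act[OF order.refl r] by simp
  also have "\<dots> = lin (inj_words n r) (KSh r 1) f" by (rule act_Phi_Sh[OF order.refl r])
  also have "\<dots> = f"
  proof
    fix v
    have "lin (inj_words n r) (KSh r 1) f v = (\<Sum>w\<in>inj_words n r. if w = v then f w else 0)"
      unfolding lin_def
    proof (rule sum.cong[OF refl])
      fix w assume "w \<in> inj_words n r"
      then have "length w = r" by (simp add: inj_words_def)
      then have "KSh r 1 w v = (if w = v then 1 else 0)" by (rule KSh_1)
      then show "f w * KSh r 1 w v = (if w = v then f w else 0)" by simp
    qed
    also have "\<dots> = (if v \<in> inj_words n r then f v else 0)" by (simp add: finite_inj_words)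
    also have "\<dots> = f v" using f by (auto simp: M_def)
    finally show "lin (inj_words n r) (KSh r 1) f v = f v" .
  qed
  finally show ?thesis .
qed

lemma act_in_M:
  "act n r e h \<in> M n r"
proof -
  have "act n r e h v = 0" if v: "v \<notin> inj_words n r" for v
  proof -
    have "(\<Sum>w\<in>inj_words n r. if perm_word s w = v then h w else 0) = 0" if s: "s permutes {..<r}" for s
      using perm_word_in[OF _ s] v by (intro sum.neutral) auto
    then show ?thesis unfolding act_def by simp
  qed
  then show ?thesis unfolding M_def by auto
qed

lemma Mk_D:
  assumes k: "k \<ge> 1" and f: "f \<in> Mk n r k"
  shows "\<exists>h. f = A n r k h"
proof -
  let ?SS = "{S. S \<subseteq> {1..n} \<and> card S = r}"
  obtain g where g: "\<forall>S. S \<subseteq> {1..n} \<and> card S = r \<longrightarrow> g S \<in> MSk n r k S"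
    and fg: "f = (\<lambda>v. \<Sum>S\<in>?SS. g S v)"
    using f k by (auto simp: Mk_def)
  have "\<forall>S\<in>?SS. \<exists>h. g S = A n r k h" using g by (auto simp: MSk_def)
  then obtain H where H: "\<forall>S\<in>?SS. g S = A n r k (H S)" by metis
  have fin: "finite ?SS" by (rule finite_subset[of _ "Pow {1..n}"]) auto
  have "f = (\<lambda>v. \<Sum>S\<in>?SS. A n r k (H S) v)" unfolding fg using H by (intro ext sum.cong) auto
  also have "\<dots> = A n r k (\<lambda>v. \<Sum>S\<in>?SS. H S v)" by (rule act_sum[OF fin, symmetric])
  finally show ?thesis by blast
qed

lemma Mk_I:
  assumes k: "k \<ge> 1"
  shows "A n r k h \<in> Mk n r k"
proof -
  let ?SS = "{S. S \<subseteq> {1..n} \<and> card S = r}"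
  have fin: "finite ?SS" by (rule finite_subset[of _ "Pow {1..n}"]) auto
  define hS where "hS = (\<lambda>S w. if distinct w \<and> set w = S then h w else 0)"
  define g where "g = (\<lambda>S. A n r k (hS S))"
  have "\<forall>S. S \<subseteq> {1..n} \<and> card S = r \<longrightarrow> g S \<in> MSk n r k S"
    unfolding g_def MSk_def MS_def hS_def by auto
  moreover have "A n r k h = (\<lambda>v. \<Sum>S\<in>?SS. g S v)"
  proof -
    have "A n r k h = A n r k (\<lambda>v. \<Sum>S\<in>?SS. hS S v)"
    proof (rule act_cong)
      fix w assume w: "w \<in> inj_words n r"
      then have "set w \<in> ?SS" by (auto simp: inj_words_def distinct_card)
      moreover have "distinct w" using w by (simp add: inj_words_def)
      ultimately show "h w = (\<Sum>S\<in>?SS. hS S w)" unfolding hS_def using fin by simp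
    qed
    also have "\<dots> = (\<lambda>v. \<Sum>S\<in>?SS. g S v)" unfolding g_def by (rule act_sum[OF fin])
    finally show ?thesis .
  qed
  ultimately show ?thesis using k by (auto simp: Mk_def)
qed

lemma bd_A:
  assumes r: "r \<ge> 2" and k: "k \<in> {1..r}"
  shows "bd n r (A n r k h) = (if k = 1 then (\<lambda>_. 0) else A n (r - 1) (k - 1) (bd n r h))"
proof
  fix v
  have r1: "r \<ge> 1" and r1': "r - 1 \<ge> 1" using r by auto
  let ?a = "\<lambda>j. bd n r (A n r j h) v - (if 2 \<le> j then A n (r - 1) (j - 1) (bd n r h) v else 0)"
  have "?a k = 0"
  proof (rule poly_coeff_zero[where a = ?a and r = r, OF _ k])
    fix m :: nat assume m: "m \<ge> 1"
    have "bd n r (act n r (\<lambda>s. (-1) ^ (m - 1) * eul_lambda r m s) h) v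
        = of_nat m * act n (r - 1) (\<lambda>s. (-1) ^ (m - 1) * eul_lambda (r - 1) m s) (bd n r h) v"
      unfolding act_Phi_Sh[OF m r1] act_Phi_Sh[OF m r1'] bd_Sh[OF r1] ..
    then have eq: "(\<Sum>j=1..r. of_nat m ^ j * bd n r (A n r j h) v) =
        of_nat m * (\<Sum>j=1..r-1. of_nat m ^ j * A n (r - 1) j (bd n r h) v)"
      unfolding Phi_act[OF m r1] Phi_act[OF m r1'] bd_linear[OF finite_atLeastAtMost] .
    have "(\<Sum>j=1..r. of_nat m ^ j * (if 2 \<le> j then A n (r - 1) (j - 1) (bd n r h) v else 0))
        = (\<Sum>j=2..r. of_nat m ^ j * A n (r - 1) (j - 1) (bd n r h) v)"
    proof -
      have "{1..r} = insert 1 {2..r}" using r by auto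
      then show ?thesis by (simp add: sum.insert)
    qed
    also have "\<dots> = (\<Sum>j=1..r-1. of_nat m ^ Suc j * A n (r - 1) j (bd n r h) v)"
    proof -
      have "r = Suc (r - 1)" using r by simp
      then have "{2..r} = {Suc 1..Suc (r - 1)}" by simp
      then show ?thesis by (simp only: sum.shift_bounds_cl_Suc_ivl) simp
    qed
    also have "\<dots> = of_nat m * (\<Sum>j=1..r-1. of_nat m ^ j * A n (r - 1) j (bd n r h) v)"
      by (simp add: sum_distrib_left mult.assoc)
    finally show "(\<Sum>j=1..r. of_nat m ^ j * ?a j) = 0"
      using eq by (simp add: right_diff_distrib sum_subtractf)
  qed
  then show "bd n r (A n r k h) v = (if k = 1 then (\<lambda>_. 0) else A n (r - 1) (k - 1) (bd n r h)) v"
    using k by auto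
qed


theorem mainTheorem4:
  fixes n :: nat
  assumes "n \<ge> 1"
  shows "(\<forall>r k. 2 \<le> r \<and> r \<le> n \<and> 1 \<le> k \<and> k \<le> r \<longrightarrow>
            bd n r ` Mk n r k \<subseteq> Mk n (r - 1) (k - 1))
       \<and> (\<forall>r. 1 \<le> r \<and> r \<le> n \<longrightarrow>
            (\<forall>k\<in>{1..r}. Mk n r k \<subseteq> M n r) \<and>
            (\<forall>f\<in>M n r. \<exists>!g. (\<forall>k\<in>{1..r}. g k \<in> Mk n r k) \<and>
                            (\<forall>k. k \<notin> {1..r} \<longrightarrow> g k = (\<lambda>_. 0)) \<and>
                            f = (\<lambda>v. \<Sum>k=1..r. g k v)))"
proof (intro conjI allI impI)
  fix r k assume h: "2 \<le> r \<and> r \<le> n \<and> 1 \<le> k \<and> k \<le> r"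
  then have r: "r \<ge> 2" and k: "k \<in> {1..r}" by auto
  show "bd n r ` Mk n r k \<subseteq> Mk n (r - 1) (k - 1)"
  proof
    fix x assume "x \<in> bd n r ` Mk n r k"
    then obtain f where f: "f \<in> Mk n r k" "x = bd n r f" by blast
    obtain h where fh: "f = A n r k h" using Mk_D[OF _ f(1)] k by auto
    have x: "x = (if k = 1 then (\<lambda>_. 0) else A n (r - 1) (k - 1) (bd n r h))"
      using f(2) fh bd_A[OF r k] by simp
    show "x \<in> Mk n (r - 1) (k - 1)"
    proof (cases "k = 1")
      case True then show ?thesis using x by (simp add: Mk_def)
    next
      case False
      then have "k - 1 \<ge> 1" using k by auto
      then show ?thesis using x False Mk_I by simp
    qed
  qed
next
  fix r assume h: "1 \<le> r \<and> r \<le> n"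
  then have r: "r \<ge> 1" by simp
  show "\<forall>k\<in>{1..r}. Mk n r k \<subseteq> M n r"
  proof (intro ballI subsetI)
    fix k f assume k: "k \<in> {1..r}" and f: "f \<in> Mk n r k"
    obtain h where "f = A n r k h" using Mk_D[OF _ f] k by auto
    then show "f \<in> M n r" using act_in_M by simp
  qed
  show "\<forall>f\<in>M n r. \<exists>!g. (\<forall>k\<in>{1..r}. g k \<in> Mk n r k) \<and>
                            (\<forall>k. k \<notin> {1..r} \<longrightarrow> g k = (\<lambda>_. 0)) \<and>
                            f = (\<lambda>v. \<Sum>k=1..r. g k v)"
  proof
    fix f assume f: "f \<in> M n r"
    define g0 where "g0 = (\<lambda>k. if k \<in> {1..r} then A n r k f else (\<lambda>_. 0))"
    show "\<exists>!g. (\<forall>k\<in>{1..r}. g k \<in> Mk n r k) \<and>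
                            (\<forall>k. k \<notin> {1..r} \<longrightarrow> g k = (\<lambda>_. 0)) \<and>
                            f = (\<lambda>v. \<Sum>k=1..r. g k v)"
    proof (rule ex1I[of _ g0])
      have "(\<lambda>v. \<Sum>k=1..r. g0 k v) = (\<lambda>v. \<Sum>k=1..r. A n r k f v)"
        unfolding g0_def by (intro ext sum.cong) auto
      also have "\<dots> = f" by (rule sum_A[OF r f])
      finally show "(\<forall>k\<in>{1..r}. g0 k \<in> Mk n r k) \<and> (\<forall>k. k \<notin> {1..r} \<longrightarrow> g0 k = (\<lambda>_. 0)) \<and>
                    f = (\<lambda>v. \<Sum>k=1..r. g0 k v)"
        unfolding g0_def using Mk_I by auto
    next
      fix g assume g: "(\<forall>k\<in>{1..r}. g k \<in> Mk n r k) \<and> (\<forall>k. k \<notin> {1..r} \<longrightarrow> g k = (\<lambda>_. 0)) \<and>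
                    f = (\<lambda>v. \<Sum>k=1..r. g k v)"
      have "\<forall>k\<in>{1..r}. \<exists>h. g k = A n r k h" using g Mk_D by auto
      then obtain H where H: "\<forall>k\<in>{1..r}. g k = A n r k (H k)" by metis
      show "g = g0"
      proof
        fix k
        show "g k = g0 k"
        proof (cases "k \<in> {1..r}")
          case False
          then have "g k = (\<lambda>_. 0)" using g by blast
          then show ?thesis using False unfolding g0_def by auto
        next
          case True
          have "A n r k f = A n r k (\<lambda>v. \<Sum>j=1..r. g j v)" using g by simp
          also have "\<dots> = (\<lambda>v. \<Sum>j=1..r. A n r k (g j) v)" by (rule act_sum) simp
          also have "\<dots> = (\<lambda>v. \<Sum>j=1..r. if k = j then A n r j (H j) v else 0)"
            using H orth[OF r True] by (intro ext sum.cong refl) auto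
          also have "\<dots> = A n r k (H k)" using True by simp
          also have "\<dots> = g k" using H True by simp
          finally show ?thesis using True by (simp add: g0_def)
        qed
      qed
    qed
  qed
qed

end
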